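(* Let $k\ge1$, let $\mathbf r=(r_1,\dots,r_k),\mathbf s=(s_1,\dots,s_k)\in\{1,\dots,n\}^k$ be fixed and let $j\in\{1,\dots,n\}$. Then, modulo the two-sided ideal of $\mathcal A$ generated by $\mathfrak{det}_q^{(1)}$, \[\sum_{j<j_1<j_2<\dots<j_k\le n}(\mathbf r|j_k\ldots j_2j_1)_r(\mathbf s|j_1j_2\ldots j_k)^*_r\equiv(-1)^kq^{2\sum_{i=0}^{k-1}i}\sum_{j_1<j_2<\dots<j_k\le j}(\mathbf r|j_k\ldots j_2j_1)_r(\mathbf s|j_1j_2\ldots j_k)^*_r.\]
   Context: $R$ commutative ring with $1$, $q\in R$ invertible, $n\ge1$. $\mathcal A$ is the quotient of the tensor product of the free $R$-algebras on $x_{ij}$ and on $x^*_{ij}$ ($1\le i,j\le n$; write $ab$ for $a\otimes b$; multiplication concatenates $x$-parts and $x^*$-parts separately) by the two-sided ideal generated by: $x_{ik}x_{jk}-qx_{jk}x_{ik}$ ($i<j$); $x_{ki}x_{kj}-qx_{kj}x_{ki}$ ($i<j$); $x_{ij}x_{kl}-x_{kl}x_{ij}$ ($i<k,j>l$); $x_{ij}x_{kl}-x_{kl}x_{ij}-(q-q^{-1})x_{il}x_{kj}$ ($i<k,j<l$); the same four with $x^*,q^{-1}$ in place of $x,q$; $\sum_kx_{ik}x^*_{jk}$ and $\sum_kq^{2k}x_{ki}x^*_{kj}$ ($i\ne j$); $\sum_kq^{2k-2i}x_{ki}x^*_{ki}-\sum_kx_{jk}x^*_{jk}$. $\mathfrak{det}_q^{(1)}=\sum_lx_{1l}x^*_{1l}$.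 Right quantum minors: for $i_1<\dots<i_k$ and arbitrary $j_1,\dots,j_k$, $(i_1\ldots i_k|j_1\ldots j_k)_r=\sum_{w\in\mathfrak S_k}(-q)^{l(w)}x_{i_{w1}j_1}\cdots x_{i_{wk}j_k}$; for general $i$'s, $(\ldots i_li_{l+1}\ldots|j)_r=-q^{-1}(\ldots i_{l+1}i_l\ldots|j)_r$ whenever $i_l>i_{l+1}$, and the minor is $0$ if two $i$'s coincide. The starred minors $(\ldots|\ldots)^*_r$ are defined in the same way with $x^*_{ij}$ in place of $x_{ij}$ and $q^{-1}$ in place of $q$. *)

theory Defs
  imports Main "HOL-Combinatorics.Permutations"
begin

text \<open>Elements of the free product algebra: functions on pairs of words
(x-word, x*-word) to the coefficient ring.
Multiplication concatenates x-parts and x*-parts separately.\<close>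

type_synonym word = "(nat \<times> nat) list \<times> (nat \<times> nat) list"
type_synonym 'r elt = "word \<Rightarrow> 'r"

definition mono :: "word \<Rightarrow> 'r::comm_ring_1 elt" where
  "mono u = (\<lambda>w. if w = u then 1 else 0)"

definition azero :: "'r::comm_ring_1 elt" where "azero = (\<lambda>_. 0)"
definition aone :: "'r::comm_ring_1 elt" where "aone = mono ([], [])"
definition aadd :: "'r::comm_ring_1 elt \<Rightarrow> 'r elt \<Rightarrow> 'r elt" where
  "aadd f g = (\<lambda>w. f w + g w)"
definition asub :: "'r::comm_ring_1 elt \<Rightarrow> 'r elt \<Rightarrow> 'r elt" where
  "asub f g = (\<lambda>w. f w - g w)"
definition asmult :: "'r::comm_ring_1 \<Rightarrow> 'r elt \<Rightarrow> 'r elt" where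
  "asmult c f = (\<lambda>w. c * f w)"
definition asum :: "('a \<Rightarrow> 'r::comm_ring_1 elt) \<Rightarrow> 'a set \<Rightarrow> 'r elt" where
  "asum F S = (\<lambda>w. \<Sum>a\<in>S. F a w)"

definition amul :: "'r::comm_ring_1 elt \<Rightarrow> 'r elt \<Rightarrow> 'r elt" where
  "amul f g = (\<lambda>(a, b). \<Sum>i\<in>{0..length a}. \<Sum>j\<in>{0..length b}.
      f (take i a, take j b) * g (drop i a, drop j b))"

definition aprod :: "'r::comm_ring_1 elt list \<Rightarrow> 'r elt" where
  "aprod fs = foldr amul fs aone"

definition X :: "nat \<Rightarrow> nat \<Rightarrow> 'r::comm_ring_1 elt" where
  "X i j = mono ([(i, j)], [])"
definition Xs :: "nat \<Rightarrow> nat \<Rightarrow> 'r::comm_ring_1 elt" where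
  "Xs i j = mono ([], [(i, j)])"

inductive_set ideal_gen :: "'r::comm_ring_1 elt set \<Rightarrow> 'r elt set" for G where
  gen: "g \<in> G \<Longrightarrow> g \<in> ideal_gen G"
| zero: "azero \<in> ideal_gen G"
| add: "a \<in> ideal_gen G \<Longrightarrow> b \<in> ideal_gen G \<Longrightarrow> aadd a b \<in> ideal_gen G"
| mult: "a \<in> ideal_gen G \<Longrightarrow> asmult c (amul (amul (mono u) a) (mono v)) \<in> ideal_gen G"

text \<open>The four quantum-matrix relations for generators Y with parameter p
(p is q for x, q^{-1} for x*), pinv its inverse.\<close>
definition qmat_rels :: "nat \<Rightarrow> (nat \<Rightarrow> nat \<Rightarrow> 'r::comm_ring_1 elt) \<Rightarrow> 'r \<Rightarrow> 'r \<Rightarrow> 'r elt set" where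
  "qmat_rels n Y p pinv =
     {asub (amul (Y i k) (Y j k)) (asmult p (amul (Y j k) (Y i k))) | i j k.
        i \<in> {1..n} \<and> j \<in> {1..n} \<and> k \<in> {1..n} \<and> i < j}
   \<union> {asub (amul (Y k i) (Y k j)) (asmult p (amul (Y k j) (Y k i))) | i j k.
        i \<in> {1..n} \<and> j \<in> {1..n} \<and> k \<in> {1..n} \<and> i < j}
   \<union> {asub (amul (Y i j) (Y k l)) (amul (Y k l) (Y i j)) | i j k l.
        i \<in> {1..n} \<and> j \<in> {1..n} \<and> k \<in> {1..n} \<and> l \<in> {1..n} \<and> i < k \<and> j > l}
   \<union> {asub (asub (amul (Y i j) (Y k l)) (amul (Y k l) (Y i j)))
          (asmult (p - pinv) (amul (Y i l) (Y k j))) | i j k l.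
        i \<in> {1..n} \<and> j \<in> {1..n} \<and> k \<in> {1..n} \<and> l \<in> {1..n} \<and> i < k \<and> j < l}"

text \<open>q^{2k-2i} is written q^{2k} * qi^{2i}, qi being the inverse of q.\<close>
definition rels :: "nat \<Rightarrow> 'r::comm_ring_1 \<Rightarrow> 'r \<Rightarrow> 'r elt set" where
  "rels n q qi =
     qmat_rels n X q qi \<union> qmat_rels n Xs qi q
   \<union> {asum (\<lambda>k. amul (X i k) (Xs j k)) {1..n} | i j.
        i \<in> {1..n} \<and> j \<in> {1..n} \<and> i \<noteq> j}
   \<union> {asum (\<lambda>k. asmult (q ^ (2 * k)) (amul (X k i) (Xs k j))) {1..n} | i j.
        i \<in> {1..n} \<and> j \<in> {1..n} \<and> i \<noteq> j}
   \<union> {asub (asum (\<lambda>k. asmult (q ^ (2 * k) * qi ^ (2 * i)) (amul (X k i) (Xs k i))) {1..n})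
          (asum (\<lambda>k. amul (X j k) (Xs j k)) {1..n}) | i j.
        i \<in> {1..n} \<and> j \<in> {1..n}}"

definition qdet1 :: "nat \<Rightarrow> 'r::comm_ring_1 elt" where
  "qdet1 n = asum (\<lambda>l. amul (X 1 l) (Xs 1 l)) {1..n}"

text \<open>Congruence in A modulo the two-sided ideal of A generated by det_q^(1):
the difference lies in the ideal of the free algebra generated by the
defining relations of A together with det_q^(1).\<close>
definition cong_det1 :: "nat \<Rightarrow> 'r::comm_ring_1 \<Rightarrow> 'r \<Rightarrow> 'r elt \<Rightarrow> 'r elt \<Rightarrow> bool" where
  "cong_det1 n q qi a b \<longleftrightarrow> asub a b \<in> ideal_gen (rels n q qi \<union> {qdet1 n})"

definition perm_len :: "nat \<Rightarrow> (nat \<Rightarrow> nat) \<Rightarrow> nat" where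
  "perm_len k w = card {(a, b). a < b \<and> b < k \<and> w a > w b}"

definition list_inv :: "nat list \<Rightarrow> nat" where
  "list_inv is = card {(a, b). a < b \<and> b < length is \<and> is ! a > is ! b}"

definition sorted_minor :: "(nat \<Rightarrow> nat \<Rightarrow> 'r::comm_ring_1 elt) \<Rightarrow> 'r \<Rightarrow> nat list \<Rightarrow> nat list \<Rightarrow> 'r elt" where
  "sorted_minor Y p is js =
     asum (\<lambda>w. asmult ((- p) ^ perm_len (length is) w)
                 (aprod (map (\<lambda>t. Y (is ! w t) (js ! t)) [0..<length is])))
          {w. w permutes {0..<length is}}"

text \<open>General row indices: 0 if two coincide; otherwise each adjacent swap
of a descent gives a factor -p^{-1}, i.e. the factor (-p^{-1})^(number of
inversions) times the minor with sorted rows.\<close>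
definition gen_minor :: "(nat \<Rightarrow> nat \<Rightarrow> 'r::comm_ring_1 elt) \<Rightarrow> 'r \<Rightarrow> 'r \<Rightarrow> nat list \<Rightarrow> nat list \<Rightarrow> 'r elt" where
  "gen_minor Y p pinv is js =
     (if distinct is then asmult ((- pinv) ^ list_inv is) (sorted_minor Y p (sort is) js)
      else azero)"

definition rminor :: "'r::comm_ring_1 \<Rightarrow> 'r \<Rightarrow> nat list \<Rightarrow> nat list \<Rightarrow> 'r elt" where
  "rminor q qi is js = gen_minor X q qi is js"

definition rminor_star :: "'r::comm_ring_1 \<Rightarrow> 'r \<Rightarrow> nat list \<Rightarrow> nat list \<Rightarrow> 'r elt" where
  "rminor_star q qi is js = gen_minor Xs qi q is js"

end

theory Submission
  imports Defs "HOL-Library.Function_Algebras" "HOL-Combinatorics.Multiset_Permutations"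
begin


definition cst :: "'r::comm_ring_1 \<Rightarrow> 'r elt" where "cst c = (\<lambda>_. c)"

lemma K_apply[simp]: "cst c w = c" by (simp add: cst_def)
lemma K_mult: "cst (a * b) = cst a * cst b" by (simp add: fun_eq_iff)
lemma K_add: "cst (a + b) = cst a + cst b" by (simp add: fun_eq_iff)
lemma K_diff: "cst (a - b) = cst a - cst b" by (simp add: fun_eq_iff)
lemma K_minus: "cst (- a) = - cst a" by (simp add: fun_eq_iff)
lemma K_one: "cst 1 = 1" by (simp add: fun_eq_iff)
lemma K_zero: "cst 0 = 0" by (simp add: fun_eq_iff)
lemma power_fun_apply: "((f::'a \<Rightarrow> 'b::comm_ring_1) ^ m) x = (f x) ^ m"
  by (induct m) simp_all
lemma K_power: "cst (a ^ m) = cst a ^ m" by (simp add: fun_eq_iff power_fun_apply)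
lemmas K_simps = K_mult K_add K_diff K_minus K_one K_zero K_power

lemma sum_fun_apply: "(\<Sum>a\<in>S. F a) w = (\<Sum>a\<in>S. F a w)"
  by (induct S rule: infinite_finite_induct) auto

lemma aadd_eq: "aadd f g = f + g" by (simp add: aadd_def fun_eq_iff)
lemma asub_eq: "asub f g = f - g" by (simp add: asub_def fun_eq_iff)
lemma asmult_eq: "asmult c f = cst c * f" by (simp add: asmult_def fun_eq_iff)
lemma asum_eq: "asum F S = (\<Sum>a\<in>S. F a)" by (simp add: asum_def fun_eq_iff sum_fun_apply)
lemma azero_eq: "azero = 0" by (simp add: azero_def fun_eq_iff)

lemma mono_apply: "mono u w = (if w = u then 1 else 0)" by (simp add: mono_def)

lemma amul_apply: "amul f g (x, y) = (\<Sum>i\<in>{0..length x}. \<Sum>j\<in>{0..length y}.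
      f (take i x, take j y) * g (drop i x, drop j y))"
  by (simp add: amul_def)

lemma amul_add_left: "amul (f + g) h = amul f h + amul g h"
  by (auto simp: fun_eq_iff amul_apply sum.distrib algebra_simps)
lemma amul_add_right: "amul f (g + h) = amul f g + amul f h"
  by (auto simp: fun_eq_iff amul_apply sum.distrib algebra_simps)
lemma amul_diff_left: "amul (f - g) h = amul f h - amul g h"
  by (auto simp: fun_eq_iff amul_apply sum_subtractf algebra_simps)
lemma amul_diff_right: "amul f (g - h) = amul f g - amul f h"
  by (auto simp: fun_eq_iff amul_apply sum_subtractf algebra_simps)
lemma amul_K_left: "amul (cst c * f) h = cst c * amul f h"
  by (auto simp: fun_eq_iff amul_apply sum_distrib_left algebra_simps)
lemma amul_K_right: "amul f (cst c * h) = cst c * amul f h"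
  by (auto simp: fun_eq_iff amul_apply sum_distrib_left algebra_simps)
lemma amul_zero_left: "amul 0 h = 0"
  by (auto simp: fun_eq_iff amul_apply)
lemma amul_zero_right: "amul f 0 = 0"
  by (auto simp: fun_eq_iff amul_apply)
lemma amul_sum_left: "amul (\<Sum>a\<in>S. F a) h = (\<Sum>a\<in>S. amul (F a) h)"
proof (rule ext, clarify)
  fix x y
  have "amul (\<Sum>a\<in>S. F a) h (x, y) = (\<Sum>i\<in>{0..length x}. \<Sum>j\<in>{0..length y}. \<Sum>a\<in>S.
     F a (take i x, take j y) * h (drop i x, drop j y))"
    by (simp add: amul_apply sum_fun_apply sum_distrib_right)
  also have "\<dots> = (\<Sum>i\<in>{0..length x}. \<Sum>a\<in>S. \<Sum>j\<in>{0..length y}.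
     F a (take i x, take j y) * h (drop i x, drop j y))"
    by (rule sum.cong[OF refl], rule sum.swap)
  also have "\<dots> = (\<Sum>a\<in>S. \<Sum>i\<in>{0..length x}. \<Sum>j\<in>{0..length y}.
     F a (take i x, take j y) * h (drop i x, drop j y))"
    by (rule sum.swap)
  also have "\<dots> = (\<Sum>a\<in>S. amul (F a) h) (x, y)"
    by (simp add: amul_apply sum_fun_apply)
  finally show "amul (\<Sum>a\<in>S. F a) h (x, y) = (\<Sum>a\<in>S. amul (F a) h) (x, y)" .
qed

lemma amul_sum_right: "amul h (\<Sum>a\<in>S. F a) = (\<Sum>a\<in>S. amul h (F a))"
proof (rule ext, clarify)
  fix x y
  have "amul h (\<Sum>a\<in>S. F a) (x, y) = (\<Sum>i\<in>{0..length x}. \<Sum>j\<in>{0..length y}. \<Sum>a\<in>S.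
     h (take i x, take j y) * F a (drop i x, drop j y))"
    by (simp add: amul_apply sum_fun_apply sum_distrib_left)
  also have "\<dots> = (\<Sum>i\<in>{0..length x}. \<Sum>a\<in>S. \<Sum>j\<in>{0..length y}.
     h (take i x, take j y) * F a (drop i x, drop j y))"
    by (rule sum.cong[OF refl], rule sum.swap)
  also have "\<dots> = (\<Sum>a\<in>S. \<Sum>i\<in>{0..length x}. \<Sum>j\<in>{0..length y}.
     h (take i x, take j y) * F a (drop i x, drop j y))"
    by (rule sum.swap)
  also have "\<dots> = (\<Sum>a\<in>S. amul h (F a)) (x, y)"
    by (simp add: amul_apply sum_fun_apply)
  finally show "amul h (\<Sum>a\<in>S. F a) (x, y) = (\<Sum>a\<in>S. amul h (F a)) (x, y)" .
qed

lemma take_drop_iff: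
  assumes "i \<le> length x"
  shows "(take i x = a \<and> drop i x = c) \<longleftrightarrow> (i = length a \<and> x = a @ c)"
proof
  assume h: "take i x = a \<and> drop i x = c"
  then have "length a = i" using assms by auto
  moreover have "x = a @ c" using h by (metis append_take_drop_id)
  ultimately show "i = length a \<and> x = a @ c" by simp
next
  assume "i = length a \<and> x = a @ c"
  then show "take i x = a \<and> drop i x = c" by simp
qed

lemma sum_take_drop:
  "(\<Sum>i\<in>{0..length x}. (if take i x = a then 1 else 0) * (if drop i x = c then 1 else (0::'r::comm_ring_1)))
    = (if x = a @ c then 1 else 0)"
proof -
  have "(\<Sum>i\<in>{0..length x}. (if take i x = a then 1 else 0) * (if drop i x = c then 1 else (0::'r)))
      = (\<Sum>i\<in>{0..length x}. if i = length a then (if x = a @ c then 1 else 0) else 0)"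
  proof (rule sum.cong)
    fix i assume "i \<in> {0..length x}"
    then have i: "i \<le> length x" by simp
    show "(if take i x = a then 1 else 0) * (if drop i x = c then 1 else (0::'r)) =
      (if i = length a then (if x = a @ c then 1 else 0) else 0)"
      using take_drop_iff[OF i, of a c] by (cases "take i x = a"; cases "drop i x = c") auto
  qed simp
  also have "\<dots> = (if x = a @ c then 1 else 0)" by (auto simp: sum.delta)
  finally show ?thesis .
qed

lemma amul_mono_mono: "amul (mono (a, b) :: 'r::comm_ring_1 elt) (mono (c, d)) = mono (a @ c, b @ d)"
proof (rule ext, clarify)
  fix x y
  have "amul (mono (a, b)) (mono (c, d)) (x, y) =
     (\<Sum>i\<in>{0..length x}. \<Sum>j\<in>{0..length y}.
       ((if take i x = a then 1 else 0) * (if drop i x = c then 1 else (0::'r))) *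
       ((if take j y = b then 1 else 0) * (if drop j y = d then 1 else 0)))"
    unfolding amul_apply mono_apply by (rule sum.cong, simp, rule sum.cong) auto
  also have "\<dots> = (\<Sum>i\<in>{0..length x}. ((if take i x = a then 1 else 0) * (if drop i x = c then 1 else (0::'r)))) *
       (\<Sum>j\<in>{0..length y}. ((if take j y = b then 1 else 0) * (if drop j y = d then 1 else 0)))"
    by (simp add: sum_product)
  also have "\<dots> = mono (a @ c, b @ d) (x, y)"
    unfolding sum_take_drop mono_apply by auto
  finally show "amul (mono (a, b)) (mono (c, d)) (x, y) = (mono (a @ c, b @ d) :: 'r elt) (x, y)" .
qed

lemma aone_eq: "aone = mono ([], [])" by (simp add: aone_def)

lemma amul_one_left: "amul (mono ([], [])) f = f"
proof (rule ext, clarify)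
  fix x y
  have "amul (mono ([], [])) f (x, y) = (\<Sum>i\<in>{0..length x}. \<Sum>j\<in>{0..length y}.
      (if i = 0 \<and> j = 0 then f (x, y) else 0))"
    unfolding amul_apply mono_apply by (rule sum.cong, simp, rule sum.cong) auto
  also have "\<dots> = (\<Sum>i\<in>{0..length x}. if i = 0 then f (x, y) else 0)"
    by (rule sum.cong) (auto simp: sum.delta')
  also have "\<dots> = f (x, y)" by (simp add: sum.delta')
  finally show "amul (mono ([], [])) f (x, y) = f (x, y)" .
qed

lemma amul_one_right: "amul f (mono ([], [])) = f"
proof (rule ext, clarify)
  fix x y
  have "amul f (mono ([], [])) (x, y) = (\<Sum>i\<in>{0..length x}. \<Sum>j\<in>{0..length y}.
      (if i = length x \<and> j = length y then f (x, y) else 0))"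
    unfolding amul_apply mono_apply by (rule sum.cong, simp, rule sum.cong) auto
  also have "\<dots> = (\<Sum>i\<in>{0..length x}. if i = length x then f (x, y) else 0)"
    by (rule sum.cong) (auto simp: sum.delta')
  also have "\<dots> = f (x, y)" by (simp add: sum.delta')
  finally show "amul f (mono ([], [])) (x, y) = f (x, y)" .
qed



lemma take_eq_iff: "i \<le> length x \<Longrightarrow> (take i x = a) = (i = length a \<and> take (length a) x = a)"
  by (auto dest: arg_cong[of _ _ length])

lemma amul_mono_left_apply:
  "amul (mono (a, b)) h (x, y) =
    (if take (length a) x = a \<and> take (length b) y = b then h (drop (length a) x, drop (length b) y) else 0)"
proof -
  have "amul (mono (a, b)) h (x, y) = (\<Sum>i\<in>{0..length x}. \<Sum>j\<in>{0..length y}.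
      (if i = length a \<and> take (length a) x = a then 1 else 0) *
      ((if j = length b \<and> take (length b) y = b then 1 else 0) * h (drop i x, drop j y)))"
    unfolding amul_apply mono_apply
    apply (rule sum.cong[OF refl], rule sum.cong[OF refl])
    subgoal for i j using take_eq_iff[of i x a] take_eq_iff[of j y b] by auto
    done
  also have "\<dots> = (\<Sum>i\<in>{0..length x}. (if i = length a \<and> take (length a) x = a then 1 else 0) *
      (\<Sum>j\<in>{0..length y}.
      ((if j = length b \<and> take (length b) y = b then 1 else 0) * h (drop i x, drop j y))))"
    by (simp add: sum_distrib_left)
  also have "\<dots> = (\<Sum>i\<in>{0..length x}. (if i = length a \<and> take (length a) x = a then 1 else 0) *
      (if take (length b) y = b then h (drop i x, drop (length b) y) else 0))"
  proof (rule sum.cong[OF refl])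
    fix i
    have "(\<Sum>j\<in>{0..length y}. ((if j = length b \<and> take (length b) y = b then 1 else 0) * h (drop i x, drop j y)))
       = (\<Sum>j\<in>{0..length y}. if j = length b then (if take (length b) y = b then h (drop i x, drop (length b) y) else 0) else 0)"
      by (rule sum.cong) auto
    also have "\<dots> = (if take (length b) y = b then h (drop i x, drop (length b) y) else 0)"
      by (auto simp: sum.delta')
    finally show "(if i = length a \<and> take (length a) x = a then 1 else 0) *
      (\<Sum>j\<in>{0..length y}. ((if j = length b \<and> take (length b) y = b then 1 else 0) * h (drop i x, drop j y))) =
      (if i = length a \<and> take (length a) x = a then 1 else 0) *
      (if take (length b) y = b then h (drop i x, drop (length b) y) else 0)" by simp
  qed
  also have "\<dots> = (\<Sum>i\<in>{0..length x}. if i = length a then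
      (if take (length a) x = a \<and> take (length b) y = b then h (drop (length a) x, drop (length b) y) else 0) else 0)"
    by (rule sum.cong) auto
  also have "\<dots> = (if take (length a) x = a \<and> take (length b) y = b then h (drop (length a) x, drop (length b) y) else 0)"
    by (auto simp: sum.delta' dest: arg_cong[of _ _ length])
  finally show ?thesis .
qed

lemma take_append_iff:
  "take (length a + length c) x = a @ c \<longleftrightarrow> take (length a) x = a \<and> take (length c) (drop (length a) x) = c"
proof -
  have "take (length a + length c) x = take (length a) x @ take (length c) (drop (length a) x)"
    by (simp add: take_add)
  show ?thesis
  proof (cases "length a \<le> length x")
    case True
    then have "length (take (length a) x) = length a" by simp
    then show ?thesis using \<open>take (length a + length c) x = _\<close> by auto
  next
    case False
    then have "take (length a) x \<noteq> a" by (auto dest: arg_cong[of _ _ length])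
    moreover have "take (length a + length c) x \<noteq> a @ c" using False by (auto dest: arg_cong[of _ _ length])
    ultimately show ?thesis by simp
  qed
qed

lemma amul_mono_assoc:
  "amul (mono u) (amul (mono v) h) = amul (amul (mono u) (mono v)) (h :: 'r::comm_ring_1 elt)"
proof -
  obtain a b where u: "u = (a, b)" by force
  obtain c d where v: "v = (c, d)" by force
  show ?thesis unfolding u v amul_mono_mono
    by (rule ext, clarify) (simp add: amul_mono_left_apply take_append_iff drop_drop add.commute)
qed

definition fs :: "'r::comm_ring_1 elt \<Rightarrow> bool" where "fs f \<longleftrightarrow> finite {w. f w \<noteq> 0}"

lemma fs_mono[simp]: "fs (mono u)"
proof -
  have "{w. mono u w \<noteq> (0::'a)} \<subseteq> {u}" by (auto simp: mono_apply split: if_splits)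
  then show ?thesis unfolding fs_def using finite_subset by blast
qed
lemma fs_zero[simp]: "fs 0" by (simp add: fs_def)
lemma fs_add[simp]: "fs f \<Longrightarrow> fs g \<Longrightarrow> fs (f + g)"
  unfolding fs_def by (rule finite_subset[of _ "{w. f w \<noteq> 0} \<union> {w. g w \<noteq> 0}"]) auto
lemma fs_uminus[simp]: "fs f \<Longrightarrow> fs (- f)" unfolding fs_def by simp
lemma fs_diff[simp]: "fs f \<Longrightarrow> fs g \<Longrightarrow> fs (f - g)"
  unfolding fs_def by (rule finite_subset[of _ "{w. f w \<noteq> 0} \<union> {w. g w \<noteq> 0}"]) auto
lemma fs_K[simp]: "fs f \<Longrightarrow> fs (cst c * f)"
  unfolding fs_def by (rule finite_subset[of _ "{w. f w \<noteq> 0}"]) auto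
lemma fs_sum: assumes "\<And>a. a \<in> S \<Longrightarrow> fs (F a)" shows "fs (\<Sum>a\<in>S. F a)"
proof (cases "finite S")
  case False then show ?thesis by simp
next
  case True then show ?thesis using assms by (induct S rule: finite_induct) auto
qed

lemma fs_repr:
  assumes "fs f"
  shows "f = (\<Sum>w\<in>{w. f w \<noteq> 0}. cst (f w) * mono w)"
proof (rule ext)
  fix z
  have fin: "finite {w. f w \<noteq> 0}" using assms by (simp add: fs_def)
  have "(\<Sum>w\<in>{w. f w \<noteq> 0}. cst (f w) * mono w) z = (\<Sum>w\<in>{w. f w \<noteq> 0}. if w = z then f w else 0)"
    by (rule trans[OF sum_fun_apply], rule sum.cong) (auto simp: mono_apply)
  also have "\<dots> = f z" using fin by (simp add: sum.delta)
  finally show "f z = (\<Sum>w\<in>{w. f w \<noteq> 0}. cst (f w) * mono w) z" by simp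
qed

lemma I0: "0 \<in> ideal_gen G" using ideal_gen.zero[of G] by (simp add: azero_eq)
lemma Iadd: "a \<in> ideal_gen G \<Longrightarrow> b \<in> ideal_gen G \<Longrightarrow> a + b \<in> ideal_gen G"
  using ideal_gen.add[of a G b] by (simp add: aadd_eq)
lemma Imult: "a \<in> ideal_gen G \<Longrightarrow> cst c * amul (amul (mono u) a) (mono v) \<in> ideal_gen G"
  using ideal_gen.mult[of a G c u v] by (simp add: asmult_eq)
lemma IK: "a \<in> ideal_gen G \<Longrightarrow> cst c * a \<in> ideal_gen G"
  using Imult[of a G c "([],[])" "([],[])"] by (simp add: amul_one_left amul_one_right)
lemma Ilmono: "a \<in> ideal_gen G \<Longrightarrow> amul (mono u) a \<in> ideal_gen G"
  using Imult[of a G 1 u "([],[])"] by (simp add: amul_one_right K_one)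
lemma Irmono: "a \<in> ideal_gen G \<Longrightarrow> amul a (mono v) \<in> ideal_gen G"
  using Imult[of a G 1 "([],[])" v] by (simp add: amul_one_left K_one)
lemma Igen: "a \<in> G \<Longrightarrow> a \<in> ideal_gen G" by (rule ideal_gen.gen)
lemma Ineg: "a \<in> ideal_gen G \<Longrightarrow> - a \<in> ideal_gen G"
  using IK[of a G "-1"] by (simp add: K_minus K_one)
lemma Idiff: "a \<in> ideal_gen G \<Longrightarrow> b \<in> ideal_gen G \<Longrightarrow> a - b \<in> ideal_gen G"
  using Iadd[of a G "- b"] Ineg[of b G] by simp
lemma Isum: assumes "\<And>a. a \<in> S \<Longrightarrow> F a \<in> ideal_gen G" shows "(\<Sum>a\<in>S. F a) \<in> ideal_gen G"
proof (cases "finite S")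
  case False then show ?thesis by (simp add: I0)
next
  case True then show ?thesis using assms by (induct S rule: finite_induct) (auto simp: I0 Iadd)
qed
lemma Ilmul: assumes "fs g" "a \<in> ideal_gen G" shows "amul g a \<in> ideal_gen G"
proof -
  have "amul g a = (\<Sum>w\<in>{w. g w \<noteq> 0}. cst (g w) * amul (mono w) a)"
    by (subst fs_repr[OF assms(1)]) (simp add: amul_sum_left amul_K_left)
  also have "\<dots> \<in> ideal_gen G" by (intro Isum IK Ilmono assms(2))
  finally show ?thesis .
qed
lemma Irmul: assumes "fs g" "a \<in> ideal_gen G" shows "amul a g \<in> ideal_gen G"
proof -
  have "amul a g = (\<Sum>w\<in>{w. g w \<noteq> 0}. cst (g w) * amul a (mono w))"
    by (subst fs_repr[OF assms(1)]) (simp add: amul_sum_right amul_K_right)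
  also have "\<dots> \<in> ideal_gen G" by (intro Isum IK Irmono assms(2))
  finally show ?thesis .
qed

definition eqv :: "'r::comm_ring_1 elt set \<Rightarrow> 'r elt \<Rightarrow> 'r elt \<Rightarrow> bool" where
  "eqv G f g \<longleftrightarrow> f - g \<in> ideal_gen G"

lemma eqv_refl[simp]: "eqv G f f" by (simp add: eqv_def I0)
lemma eqv_sym: "eqv G f g \<Longrightarrow> eqv G g f"
  unfolding eqv_def using Ineg by fastforce
lemma eqv_trans: "eqv G f g \<Longrightarrow> eqv G g h \<Longrightarrow> eqv G f h"
  unfolding eqv_def using Iadd by fastforce
lemma eqv_add: "eqv G f g \<Longrightarrow> eqv G f' g' \<Longrightarrow> eqv G (f + f') (g + g')"
  unfolding eqv_def using Iadd by (fastforce simp: algebra_simps)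
lemma eqv_diff: "eqv G f g \<Longrightarrow> eqv G f' g' \<Longrightarrow> eqv G (f - f') (g - g')"
  unfolding eqv_def using Idiff by (fastforce simp: algebra_simps)
lemma eqv_K: "eqv G f g \<Longrightarrow> eqv G (cst c * f) (cst c * g)"
  unfolding eqv_def using IK by (fastforce simp: algebra_simps)
lemma eqv_sum: "(\<And>a. a \<in> S \<Longrightarrow> eqv G (F a) (F' a)) \<Longrightarrow> eqv G (\<Sum>a\<in>S. F a) (\<Sum>a\<in>S. F' a)"
  unfolding eqv_def by (simp add: sum_subtractf[symmetric] Isum)
lemma eqv_lmul: "fs h \<Longrightarrow> eqv G f g \<Longrightarrow> eqv G (amul h f) (amul h g)"
  unfolding eqv_def by (simp add: amul_diff_right[symmetric] Ilmul)
lemma eqv_rmul: "fs h \<Longrightarrow> eqv G f g \<Longrightarrow> eqv G (amul f h) (amul g h)"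
  unfolding eqv_def by (simp add: amul_diff_left[symmetric] Irmul)
lemma eqv_0: "eqv G f 0 \<longleftrightarrow> f \<in> ideal_gen G" by (simp add: eqv_def)
lemma eqv_gen: "f - g \<in> G \<Longrightarrow> eqv G f g" by (simp add: eqv_def Igen)
lemma eqv_eq: "f = g \<Longrightarrow> eqv G f g" by simp



definition ismono :: "(nat \<Rightarrow> nat \<Rightarrow> 'r::comm_ring_1 elt) \<Rightarrow> bool" where
  "ismono Y \<longleftrightarrow> (\<forall>a b. \<exists>u. Y a b = mono u)"

lemma ismono_X: "ismono X" by (auto simp: ismono_def X_def)
lemma ismono_Xs: "ismono Xs" by (auto simp: ismono_def Xs_def)

definition prodY :: "(nat \<Rightarrow> nat \<Rightarrow> 'r::comm_ring_1 elt) \<Rightarrow> nat list \<Rightarrow> nat list \<Rightarrow> 'r elt" where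
  "prodY Y R C = aprod (map (\<lambda>(a, b). Y a b) (zip R C))"

lemma prodY_Nil: "prodY Y [] C = mono ([], [])" by (simp add: prodY_def aprod_def aone_eq)
lemma prodY_Nil2: "prodY Y R [] = mono ([], [])" by (simp add: prodY_def aprod_def aone_eq)
lemma prodY_Cons: "prodY Y (a # R) (c # C) = amul (Y a c) (prodY Y R C)"
  by (simp add: prodY_def aprod_def)

lemma prodY_mono: assumes "ismono Y" shows "\<exists>u. prodY Y R C = mono u"
proof (induct R arbitrary: C)
  case Nil then show ?case by (auto simp: prodY_Nil)
next
  case (Cons a R)
  show ?case
  proof (cases C)
    case Nil then show ?thesis by (auto simp: prodY_Nil2)
  next
    case (Cons c C')
    obtain u1 u2 where u: "Y a c = mono (u1, u2)" using assms unfolding ismono_def by (metis surj_pair)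
    obtain v1 v2 where v: "prodY Y R C' = mono (v1, v2)" using Cons.hyps by (metis surj_pair)
    show ?thesis unfolding Cons prodY_Cons u v amul_mono_mono by blast
  qed
qed

lemma fs_prodY: "ismono Y \<Longrightarrow> fs (prodY Y R C)"
  using prodY_mono[of Y R C] by auto
lemma fs_Y: "ismono Y \<Longrightarrow> fs (Y a b)"
  unfolding ismono_def by (metis fs_mono)

lemma amul_Y_assoc: "ismono Y \<Longrightarrow> amul (Y a b) (amul (Y c d) h) = amul (amul (Y a b) (Y c d)) h"
  unfolding ismono_def by (metis amul_mono_assoc)

definition rk :: "nat set \<Rightarrow> nat \<Rightarrow> nat" where "rk A a = card {x\<in>A. x < a}"

lemma list_inv_Cons: "list_inv (c # L) = length (filter (\<lambda>x. x < c) L) + list_inv L"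
proof -
  let ?P = "{i. i < length L \<and> L ! i < c}"
  let ?Q = "{(a, b). a < b \<and> b < length L \<and> L ! a > L ! b}"
  let ?S = "{(a, b). a < b \<and> b < length (c # L) \<and> (c # L) ! a > (c # L) ! b}"
  have eq: "?S = (\<lambda>i. (0::nat, Suc i)) ` ?P \<union> (\<lambda>(a, b). (Suc a, Suc b)) ` ?Q"
  proof (rule set_eqI)
    fix z :: "nat \<times> nat"
    obtain a b where z: "z = (a, b)" by force
    show "z \<in> ?S \<longleftrightarrow> z \<in> (\<lambda>i. (0::nat, Suc i)) ` ?P \<union> (\<lambda>(a, b). (Suc a, Suc b)) ` ?Q"
      unfolding z
    proof (cases a)
      case 0 then show "(a, b) \<in> ?S \<longleftrightarrow> (a, b) \<in> (\<lambda>i. (0::nat, Suc i)) ` ?P \<union> (\<lambda>(a, b). (Suc a, Suc b)) ` ?Q"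
        by (cases b) (auto simp: image_iff)
    next
      case (Suc a') then show "(a, b) \<in> ?S \<longleftrightarrow> (a, b) \<in> (\<lambda>i. (0::nat, Suc i)) ` ?P \<union> (\<lambda>(a, b). (Suc a, Suc b)) ` ?Q"
        by (cases b) (auto simp: image_iff)
    qed
  qed
  have f1: "finite ?P" by simp
  have f2: "finite ?Q" by (rule finite_subset[of _ "{..<length L} \<times> {..<length L}"]) auto
  have "card ?S = card ((\<lambda>i. (0::nat, Suc i)) ` ?P) + card ((\<lambda>(a, b). (Suc a, Suc b)) ` ?Q)"
    unfolding eq by (rule card_Un_disjoint[OF finite_imageI[OF f1] finite_imageI[OF f2]]) auto
  also have "\<dots> = card ?P + card ?Q"
    by (subst card_image, simp add: inj_on_def, subst card_image) (auto simp: inj_on_def)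
  finally show ?thesis unfolding list_inv_def length_filter_conv_card by simp
qed

lemma filter_rk:
  assumes "finite A" "a \<in> A" "R \<in> permutations_of_set (A - {a})"
  shows "length (filter (\<lambda>x. x < a) R) = rk A a"
proof -
  have d: "distinct R" and s: "set R = A - {a}" using assms(3) by (auto simp: permutations_of_set_def)
  have "length (filter (\<lambda>x. x < a) R) = card ({x. x < a} \<inter> set R)"
    using d by (simp add: distinct_length_filter)
  also have "{x. x < a} \<inter> set R = {x\<in>A. x < a}" using s by auto
  finally show ?thesis by (simp add: rk_def)
qed

definition Drow :: "(nat \<Rightarrow> nat \<Rightarrow> 'r::comm_ring_1 elt) \<Rightarrow> 'r \<Rightarrow> nat set \<Rightarrow> nat list \<Rightarrow> 'r elt" where
  "Drow Y p A C = (\<Sum>R\<in>permutations_of_set A. cst ((- p) ^ list_inv R) * prodY Y R C)"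

definition Ccol :: "(nat \<Rightarrow> nat \<Rightarrow> 'r::comm_ring_1 elt) \<Rightarrow> 'r \<Rightarrow> nat list \<Rightarrow> nat set \<Rightarrow> 'r elt" where
  "Ccol Y p I B = (\<Sum>L\<in>permutations_of_set B. cst ((- p) ^ list_inv L) * prodY Y I L)"

lemma fs_Drow: "ismono Y \<Longrightarrow> fs (Drow Y p A C)"
  unfolding Drow_def by (intro fs_sum fs_K fs_prodY)
lemma fs_Ccol: "ismono Y \<Longrightarrow> fs (Ccol Y p I B)"
  unfolding Ccol_def by (intro fs_sum fs_K fs_prodY)

lemma Drow_Nil: "Drow Y p {} [] = mono ([], [])"
  by (simp add: Drow_def list_inv_def prodY_Nil K_one)
lemma Ccol_Nil: "Ccol Y p [] {} = mono ([], [])"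
  by (simp add: Ccol_def list_inv_def prodY_Nil K_one)

lemma perms_UNION_sum:
  assumes "finite A" "A \<noteq> {}"
  shows "(\<Sum>R\<in>permutations_of_set A. f R) = (\<Sum>a\<in>A. \<Sum>R\<in>permutations_of_set (A - {a}). f (a # R))"
proof -
  have "(\<Sum>R\<in>permutations_of_set A. f R) = (\<Sum>R\<in>(\<Union>a\<in>A. (#) a ` permutations_of_set (A - {a})). f R)"
    using permutations_of_set_nonempty[OF assms(2)] by simp
  also have "\<dots> = (\<Sum>a\<in>A. \<Sum>R\<in>(#) a ` permutations_of_set (A - {a}). f R)"
    by (rule sum.UNION_disjoint) (auto simp: assms)
  also have "\<dots> = (\<Sum>a\<in>A. \<Sum>R\<in>permutations_of_set (A - {a}). f (a # R))"
    by (rule sum.cong[OF refl], subst sum.reindex) (auto simp: inj_on_def)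
  finally show ?thesis .
qed

lemma Drow_Cons:
  assumes "finite A" "A \<noteq> {}"
  shows "Drow Y p A (c # C) = (\<Sum>a\<in>A. cst ((- p) ^ rk A a) * amul (Y a c) (Drow Y p (A - {a}) C))"
  unfolding Drow_def
  apply (subst perms_UNION_sum[OF assms])
  apply (rule sum.cong[OF refl])
  apply (simp add: list_inv_Cons filter_rk[OF assms(1)] power_add K_mult amul_sum_right amul_K_right
      sum_distrib_left mult.assoc prodY_Cons cong: sum.cong)
  done

lemma Ccol_Cons:
  assumes "finite B" "B \<noteq> {}"
  shows "Ccol Y p (i # I) B = (\<Sum>b\<in>B. cst ((- p) ^ rk B b) * amul (Y i b) (Ccol Y p I (B - {b})))"
  unfolding Ccol_def
  apply (subst perms_UNION_sum[OF assms])
  apply (rule sum.cong[OF refl])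
  apply (simp add: list_inv_Cons filter_rk[OF assms(1)] power_add K_mult amul_sum_right amul_K_right
      sum_distrib_left mult.assoc prodY_Cons cong: sum.cong)
  done



lemma qrel1:
  assumes "qmat_rels n Y p pinv \<subseteq> G" "i < j" "i \<in> {1..n}" "j \<in> {1..n}" "k \<in> {1..n}"
  shows "amul (Y i k) (Y j k) - cst p * amul (Y j k) (Y i k) \<in> G"
proof -
  have "asub (amul (Y i k) (Y j k)) (asmult p (amul (Y j k) (Y i k))) \<in> qmat_rels n Y p pinv"
    unfolding qmat_rels_def using assms(2-5) by blast
  then show ?thesis using assms(1) by (auto simp: asub_eq asmult_eq)
qed

lemma qrel3:
  assumes "qmat_rels n Y p pinv \<subseteq> G" "i < k" "j > l" "i \<in> {1..n}" "j \<in> {1..n}" "k \<in> {1..n}" "l \<in> {1..n}"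
  shows "amul (Y i j) (Y k l) - amul (Y k l) (Y i j) \<in> G"
proof -
  have "asub (amul (Y i j) (Y k l)) (amul (Y k l) (Y i j)) \<in> qmat_rels n Y p pinv"
    unfolding qmat_rels_def using assms(2-7) by blast
  then show ?thesis using assms(1) by (auto simp: asub_eq asmult_eq)
qed

lemma qrel4:
  assumes "qmat_rels n Y p pinv \<subseteq> G" "i < k" "j < l" "i \<in> {1..n}" "j \<in> {1..n}" "k \<in> {1..n}" "l \<in> {1..n}"
  shows "(amul (Y i j) (Y k l) - amul (Y k l) (Y i j)) - cst (p - pinv) * amul (Y i l) (Y k j) \<in> G"
proof -
  have "asub (asub (amul (Y i j) (Y k l)) (amul (Y k l) (Y i j)))
          (asmult (p - pinv) (amul (Y i l) (Y k j))) \<in> qmat_rels n Y p pinv"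
    unfolding qmat_rels_def using assms(2-7) by blast
  then show ?thesis using assms(1) by (auto simp: asub_eq asmult_eq)
qed

definition M2 :: "(nat \<Rightarrow> nat \<Rightarrow> 'r::comm_ring_1 elt) \<Rightarrow> 'r \<Rightarrow> nat \<Rightarrow> nat \<Rightarrow> nat \<Rightarrow> nat \<Rightarrow> 'r elt" where
  "M2 Y p a b c d = amul (Y a c) (Y b d) - cst p * amul (Y b c) (Y a d)"

lemma M2_rep:
  assumes "qmat_rels n Y p pinv \<subseteq> G" "a < b" "a \<in> {1..n}" "b \<in> {1..n}" "c \<in> {1..n}"
  shows "M2 Y p a b c c \<in> ideal_gen G"
  unfolding M2_def by (rule Igen, rule qrel1[OF assms])

lemma M2_swap:
  assumes "qmat_rels n Y p pinv \<subseteq> G" "p * pinv = 1" "a < b" "d < c"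
    "a \<in> {1..n}" "b \<in> {1..n}" "c \<in> {1..n}" "d \<in> {1..n}"
  shows "eqv G (M2 Y p a b c d) (cst (- p) * M2 Y p a b d c)"
proof -
  define u where "u = amul (Y a c) (Y b d)"
  define v where "v = amul (Y b d) (Y a c)"
  define w where "w = amul (Y a d) (Y b c)"
  define z where "z = amul (Y b c) (Y a d)"
  have r3: "u - v \<in> G" unfolding u_def v_def by (rule qrel3[OF assms(1,3,4,5,7,6,8)])
  have r4: "(w - z) - cst (p - pinv) * u \<in> G" unfolding u_def w_def z_def
    by (rule qrel4[OF assms(1,3,4,5,8,6,7)])
  have pp: "cst p * cst pinv = (1 :: 'a elt)" using assms(2) by (simp add: K_mult[symmetric] K_one)
  have "M2 Y p a b c d - cst (- p) * M2 Y p a b d c =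
      cst p ^ 2 * (u - v) + cst p * ((w - z) - cst (p - pinv) * u) + (1 - cst p * cst pinv) * u"
    unfolding M2_def u_def[symmetric] v_def[symmetric] w_def[symmetric] z_def[symmetric]
    by (simp add: K_diff K_minus algebra_simps power2_eq_square)
  also have "\<dots> = cst (p ^ 2) * (u - v) + cst p * ((w - z) - cst (p - pinv) * u)"
    by (simp add: pp K_power)
  also have "\<dots> \<in> ideal_gen G" by (intro Iadd IK Igen r3 r4)
  finally show ?thesis unfolding eqv_def .
qed

lemma sum_pairs:
  assumes "finite (A::nat set)"
  shows "(\<Sum>a\<in>A. \<Sum>b\<in>A - {a}. T a b) = (\<Sum>a\<in>A. \<Sum>b\<in>{b\<in>A. a < b}. T a b + T b a)"
proof -
  have "(\<Sum>a\<in>A. \<Sum>b\<in>A - {a}. T a b) = (\<Sum>a\<in>A. (\<Sum>b\<in>{b\<in>A. a < b}. T a b) + (\<Sum>b\<in>{b\<in>A. b < a}. T a b))"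
  proof (rule sum.cong[OF refl])
    fix a
    have e: "A - {a} = {b\<in>A. a < b} \<union> {b\<in>A. b < a}" by auto
    have "(\<Sum>b\<in>A - {a}. T a b) = (\<Sum>b\<in>{b\<in>A. a < b} \<union> {b\<in>A. b < a}. T a b)" by (simp only: e)
    also have "\<dots> = (\<Sum>b\<in>{b\<in>A. a < b}. T a b) + (\<Sum>b\<in>{b\<in>A. b < a}. T a b)"
      by (rule sum.union_disjoint) (use assms in auto)
    finally show "(\<Sum>b\<in>A - {a}. T a b) = (\<Sum>b\<in>{b\<in>A. a < b}. T a b) + (\<Sum>b\<in>{b\<in>A. b < a}. T a b)" .
  qed
  also have "\<dots> = (\<Sum>a\<in>A. \<Sum>b\<in>{b\<in>A. a < b}. T a b) + (\<Sum>a\<in>A. \<Sum>b\<in>{b\<in>A. b < a}. T a b)"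
    by (simp add: sum.distrib)
  also have "(\<Sum>a\<in>A. \<Sum>b\<in>{b\<in>A. b < a}. T a b) = (\<Sum>b\<in>A. \<Sum>a\<in>{a\<in>A. b < a}. T a b)"
    using sum.swap_restrict[OF assms assms, of T "\<lambda>a b. b < a"] by simp
  finally show ?thesis by (simp add: sum.distrib)
qed

lemma rk_diff_less:
  assumes "finite A" "a \<in> A" "a < b"
  shows "rk (A - {a}) b = rk A b - 1" and "rk A b \<ge> 1"
proof -
  have e: "{x\<in>A - {a}. x < b} = {x\<in>A. x < b} - {a}" by auto
  have m: "a \<in> {x\<in>A. x < b}" using assms by auto
  have f: "finite {x\<in>A. x < b}" using assms by simp
  show "rk (A - {a}) b = rk A b - 1" unfolding rk_def e using m f by (simp add: card_Diff_singleton)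
  show "rk A b \<ge> 1" unfolding rk_def using m f by (metis One_nat_def Suc_leI card_gt_0_iff empty_iff)
qed

lemma rk_diff_greater:
  assumes "a < b"
  shows "rk (A - {b}) a = rk A a"
proof -
  have "{x\<in>A - {b}. x < a} = {x\<in>A. x < a}" using assms by auto
  then show ?thesis by (simp add: rk_def)
qed

lemma Drow_pair:
  assumes "finite A" "card A = Suc (Suc (length C))" "ismono Y"
  shows "Drow Y p A (c # d # C) = (\<Sum>a\<in>A. \<Sum>b\<in>{b\<in>A. a < b}.
     cst ((- p) ^ (rk A a + rk A b - 1)) * amul (M2 Y p a b c d) (Drow Y p (A - {a} - {b}) C))"
proof -
  have ne: "A \<noteq> {}" using assms(2) by auto
  define T where "T a b = cst ((- p) ^ (rk A a + rk (A - {a}) b)) * amul (amul (Y a c) (Y b d)) (Drow Y p (A - {a} - {b}) C)" for a b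
  have "Drow Y p A (c # d # C) = (\<Sum>a\<in>A. cst ((- p) ^ rk A a) * amul (Y a c) (Drow Y p (A - {a}) (d # C)))"
    by (rule Drow_Cons[OF assms(1) ne])
  also have "\<dots> = (\<Sum>a\<in>A. \<Sum>b\<in>A - {a}. T a b)"
  proof (rule sum.cong[OF refl])
    fix a assume a: "a \<in> A"
    have "card (A - {a}) = Suc (length C)" using assms(1,2) a by (simp add: card_Diff_singleton)
    then have ne2: "A - {a} \<noteq> {}" by (metis card.empty nat.distinct(1))
    show "cst ((- p) ^ rk A a) * amul (Y a c) (Drow Y p (A - {a}) (d # C)) = (\<Sum>b\<in>A - {a}. T a b)"
      unfolding Drow_Cons[OF finite_Diff[OF assms(1)] ne2] T_def
      by (simp add: amul_sum_right amul_K_right amul_Y_assoc[OF assms(3)] sum_distrib_left power_add K_mult mult.assoc)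
  qed
  also have "\<dots> = (\<Sum>a\<in>A. \<Sum>b\<in>{b\<in>A. a < b}. T a b + T b a)" by (rule sum_pairs[OF assms(1)])
  also have "\<dots> = (\<Sum>a\<in>A. \<Sum>b\<in>{b\<in>A. a < b}.
     cst ((- p) ^ (rk A a + rk A b - 1)) * amul (M2 Y p a b c d) (Drow Y p (A - {a} - {b}) C))"
  proof (intro sum.cong refl)
    fix a b assume a: "a \<in> A" and b: "b \<in> {b\<in>A. a < b}"
    then have ab: "a < b" "b \<in> A" by auto
    have r1: "rk (A - {a}) b = rk A b - 1" and r2: "rk A b \<ge> 1" using rk_diff_less[OF assms(1) a ab(1)] by auto
    have r3: "rk (A - {b}) a = rk A a" by (rule rk_diff_greater[OF ab(1)])
    have e: "A - {b} - {a} = A - {a} - {b}" by auto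
    have pw: "(- p) ^ (rk A b + rk A a) = (- p) ^ (rk A a + rk A b - 1) * (- p)"
    proof -
      have e2: "rk A b + rk A a = Suc (rk A a + rk A b - 1)" using r2 by simp
      show ?thesis by (simp only: e2 power_Suc2)
    qed
    show "T a b + T b a = cst ((- p) ^ (rk A a + rk A b - 1)) * amul (M2 Y p a b c d) (Drow Y p (A - {a} - {b}) C)"
      unfolding T_def r1 r3 e M2_def pw using r2
      by (simp add: amul_diff_left amul_K_left K_mult K_minus algebra_simps)
  qed
  finally show ?thesis .
qed



definition goodY :: "nat \<Rightarrow> (nat \<Rightarrow> nat \<Rightarrow> 'r::comm_ring_1 elt) \<Rightarrow> 'r \<Rightarrow> 'r \<Rightarrow> 'r elt set \<Rightarrow> bool" where
  "goodY n Y p pinv G \<longleftrightarrow> qmat_rels n Y p pinv \<subseteq> G \<and> p * pinv = 1 \<and> ismono Y"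

lemma eqv_mem: "eqv G f g \<Longrightarrow> g \<in> ideal_gen G \<Longrightarrow> f \<in> ideal_gen G"
  unfolding eqv_def using Iadd by fastforce

lemma card_minus1: "finite A \<Longrightarrow> a \<in> A \<Longrightarrow> card A = Suc m \<Longrightarrow> card (A - {a}) = m"
  by (simp add: card_Diff_singleton)

lemma Drow_swap:
  assumes g: "goodY n Y p pinv G" and c: "c \<in> {1..n}" and d: "d \<in> {1..n}" and dc: "d < c"
  shows "finite A \<Longrightarrow> A \<subseteq> {1..n} \<Longrightarrow> card A = length C1 + Suc (Suc (length C2)) \<Longrightarrow>
    eqv G (Drow Y p A (C1 @ c # d # C2)) (cst (- p) * Drow Y p A (C1 @ d # c # C2))"
proof (induct C1 arbitrary: A)
  case Nil
  have rels: "qmat_rels n Y p pinv \<subseteq> G" "p * pinv = 1" and im: "ismono Y" using g by (auto simp: goodY_def)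
  have cA: "card A = Suc (Suc (length C2))" using Nil by simp
  have eq: "cst (- p) * Drow Y p A (d # c # C2) = (\<Sum>a\<in>A. \<Sum>b\<in>{b\<in>A. a < b}.
     cst ((- p) ^ (rk A a + rk A b - 1)) * amul (cst (- p) * M2 Y p a b d c) (Drow Y p (A - {a} - {b}) C2))"
    unfolding Drow_pair[OF Nil(1) cA im]
    by (simp add: sum_distrib_left amul_K_left mult.left_commute)
  have ev: "eqv G (Drow Y p A (c # d # C2)) (\<Sum>a\<in>A. \<Sum>b\<in>{b\<in>A. a < b}.
     cst ((- p) ^ (rk A a + rk A b - 1)) * amul (cst (- p) * M2 Y p a b d c) (Drow Y p (A - {a} - {b}) C2))"
    unfolding Drow_pair[OF Nil(1) cA im]
  proof (intro eqv_sum eqv_K eqv_rmul fs_Drow im)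
    fix a b assume a: "a \<in> A" and b: "b \<in> {b \<in> A. a < b}"
    show "eqv G (M2 Y p a b c d) (cst (- p) * M2 Y p a b d c)"
      by (rule M2_swap[OF rels]) (use a b Nil(2) c d dc in auto)
  qed
  show ?case unfolding append_Nil eq by (rule ev)
next
  case (Cons x C1)
  have im: "ismono Y" using g by (auto simp: goodY_def)
  have ne: "A \<noteq> {}" using Cons(4) by auto
  have eq: "cst (- p) * Drow Y p A ((x # C1) @ d # c # C2) = (\<Sum>a\<in>A. cst ((- p) ^ rk A a) *
      amul (Y a x) (cst (- p) * Drow Y p (A - {a}) (C1 @ d # c # C2)))"
    by (simp add: Drow_Cons[OF Cons(2) ne] sum_distrib_left amul_K_right mult.left_commute)
  have ev: "eqv G (Drow Y p A ((x # C1) @ c # d # C2)) (\<Sum>a\<in>A. cst ((- p) ^ rk A a) *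
      amul (Y a x) (cst (- p) * Drow Y p (A - {a}) (C1 @ d # c # C2)))"
    unfolding append_Cons Drow_Cons[OF Cons(2) ne]
  proof (intro eqv_sum eqv_K eqv_lmul fs_Y im)
    fix a assume a: "a \<in> A"
    show "eqv G (Drow Y p (A - {a}) (C1 @ c # d # C2)) (cst (- p) * Drow Y p (A - {a}) (C1 @ d # c # C2))"
      by (rule Cons(1)) (use Cons(2-4) a in \<open>auto simp: card_Diff_singleton\<close>)
  qed
  show ?case unfolding eq by (rule ev)
qed

lemma Drow_swap':
  assumes g: "goodY n Y p pinv G" and c: "c \<in> {1..n}" and d: "d \<in> {1..n}" and dc: "d < c"
    and A: "finite A" "A \<subseteq> {1..n}" "card A = length C1 + Suc (Suc (length C2))"
  shows "eqv G (Drow Y p A (C1 @ d # c # C2)) (cst (- pinv) * Drow Y p A (C1 @ c # d # C2))"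
proof -
  have pp: "p * pinv = 1" using g by (simp add: goodY_def)
  have "eqv G (cst (- pinv) * Drow Y p A (C1 @ c # d # C2)) (cst (- pinv) * (cst (- p) * Drow Y p A (C1 @ d # c # C2)))"
    by (rule eqv_K, rule Drow_swap[OF g c d dc A])
  also have "cst (- pinv) * (cst (- p) * Drow Y p A (C1 @ d # c # C2)) = Drow Y p A (C1 @ d # c # C2)"
    by (simp add: mult.assoc[symmetric] K_mult[symmetric] pp mult.commute[of pinv] K_one)
  finally show ?thesis by (rule eqv_sym)
qed

lemma Drow_rep:
  assumes g: "goodY n Y p pinv G" and c: "c \<in> {1..n}"
  shows "finite A \<Longrightarrow> A \<subseteq> {1..n} \<Longrightarrow> card A = length C1 + Suc (Suc (length C2)) \<Longrightarrow>
    Drow Y p A (C1 @ c # c # C2) \<in> ideal_gen G"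
proof (induct C1 arbitrary: A)
  case Nil
  have rels: "qmat_rels n Y p pinv \<subseteq> G" and im: "ismono Y" using g by (auto simp: goodY_def)
  have cA: "card A = Suc (Suc (length C2))" using Nil by simp
  show ?case unfolding append_Nil Drow_pair[OF Nil(1) cA im]
  proof (intro Isum IK Irmul fs_Drow im)
    fix a b assume a: "a \<in> A" and b: "b \<in> {b \<in> A. a < b}"
    show "M2 Y p a b c c \<in> ideal_gen G"
      by (rule M2_rep[OF rels]) (use a b Nil(2) c in auto)
  qed
next
  case (Cons x C1)
  have im: "ismono Y" using g by (auto simp: goodY_def)
  have ne: "A \<noteq> {}" using Cons(4) by auto
  show ?case unfolding append_Cons Drow_Cons[OF Cons(2) ne]
  proof (intro Isum IK Ilmul fs_Y im)
    fix a assume a: "a \<in> A"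
    show "Drow Y p (A - {a}) (C1 @ c # c # C2) \<in> ideal_gen G"
      by (rule Cons(1)) (use Cons(2-4) a in \<open>auto simp: card_Diff_singleton\<close>)
  qed
qed



lemma Drow_rev_insert:
  assumes g: "goodY n Y p pinv G" and c: "c \<in> {1..n}"
  shows "finite A \<Longrightarrow> A \<subseteq> {1..n} \<Longrightarrow> set D \<subseteq> {1..n} \<Longrightarrow> sorted_wrt (<) D \<Longrightarrow>
    card A = length C1 + length D + Suc (length C2) \<Longrightarrow>
    (c \<notin> set D \<longrightarrow> eqv G (Drow Y p A (C1 @ rev D @ c # C2))
        (cst ((- pinv) ^ card {x\<in>set D. x < c}) * Drow Y p A (C1 @ rev (insort c D) @ C2))) \<and>
    (c \<in> set D \<longrightarrow> Drow Y p A (C1 @ rev D @ c # C2) \<in> ideal_gen G)"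
proof (induct D arbitrary: C2)
  case Nil
  then show ?case by (simp add: K_one)
next
  case (Cons e D')
  have e: "e \<in> {1..n}" and D': "set D' \<subseteq> {1..n}" using Cons(4) by auto
  have srt: "sorted_wrt (<) D'" and egt: "\<forall>x\<in>set D'. e < x" using Cons(5) by auto
  have lst: "C1 @ rev (e # D') @ c # C2 = (C1 @ rev D') @ e # c # C2" by simp
  show ?case
  proof (cases "c < e")
    case True
    have ins: "insort c (e # D') = c # e # D'" using True by simp
    have cnt: "{x\<in>set (e # D'). x < c} = {}" using True egt by auto
    have nin: "c \<notin> set (e # D')" using True egt by auto
    show ?thesis using nin unfolding ins cnt by (simp add: K_one)
  next
    case False
    show ?thesis
    proof (cases "c = e")
      case True
      have "Drow Y p A ((C1 @ rev D') @ c # c # C2) \<in> ideal_gen G"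
        by (rule Drow_rep[OF g c Cons(2) Cons(3)]) (use Cons(6) in simp)
      then show ?thesis unfolding lst True by simp
    next
      case False2: False
      with False have ec: "e < c" by simp
      have sw: "eqv G (Drow Y p A ((C1 @ rev D') @ e # c # C2)) (cst (- pinv) * Drow Y p A ((C1 @ rev D') @ c # e # C2))"
        by (rule Drow_swap'[OF g c e ec Cons(2) Cons(3)]) (use Cons(6) in simp)
      have l2: "(C1 @ rev D') @ c # e # C2 = C1 @ rev D' @ c # (e # C2)" by simp
      have IH: "(c \<notin> set D' \<longrightarrow> eqv G (Drow Y p A (C1 @ rev D' @ c # e # C2))
        (cst ((- pinv) ^ card {x\<in>set D'. x < c}) * Drow Y p A (C1 @ rev (insort c D') @ e # C2))) \<and>
        (c \<in> set D' \<longrightarrow> Drow Y p A (C1 @ rev D' @ c # e # C2) \<in> ideal_gen G)"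
        by (rule Cons(1)[OF Cons(2,3) D' srt]) (use Cons(6) in simp)
      have ins: "insort c (e # D') = e # insort c D'" using ec by simp
      have cnt: "{x\<in>set (e # D'). x < c} = insert e {x\<in>set D'. x < c}" using ec by auto
      have enin: "e \<notin> {x\<in>set D'. x < c}" using egt by auto
      have ccnt: "card {x\<in>set (e # D'). x < c} = Suc (card {x\<in>set D'. x < c})"
        unfolding cnt using enin by simp
      show ?thesis
      proof (intro conjI impI)
        assume nin: "c \<notin> set (e # D')"
        then have nin': "c \<notin> set D'" by simp
        have "eqv G (Drow Y p A (C1 @ rev (e # D') @ c # C2))
           (cst (- pinv) * (cst ((- pinv) ^ card {x\<in>set D'. x < c}) * Drow Y p A (C1 @ rev (insort c D') @ e # C2)))"
          unfolding lst by (rule eqv_trans[OF sw], unfold l2, rule eqv_K) (use IH nin' in blast)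
        also have "cst (- pinv) * (cst ((- pinv) ^ card {x\<in>set D'. x < c}) * Drow Y p A (C1 @ rev (insort c D') @ e # C2))
          = cst ((- pinv) ^ card {x\<in>set (e # D'). x < c}) * Drow Y p A (C1 @ rev (insort c (e # D')) @ C2)"
          unfolding ccnt ins by (simp add: mult.assoc[symmetric] K_mult[symmetric])
        finally show "eqv G (Drow Y p A (C1 @ rev (e # D') @ c # C2))
          (cst ((- pinv) ^ card {x\<in>set (e # D'). x < c}) * Drow Y p A (C1 @ rev (insort c (e # D')) @ C2))" .
      next
        assume "c \<in> set (e # D')"
        then have cin: "c \<in> set D'" using False2 by simp
        have "Drow Y p A (C1 @ rev D' @ c # e # C2) \<in> ideal_gen G" using IH cin by blast
        then have "cst (- pinv) * Drow Y p A ((C1 @ rev D') @ c # e # C2) \<in> ideal_gen G"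
          by (simp add: IK)
        then show "Drow Y p A (C1 @ rev (e # D') @ c # C2) \<in> ideal_gen G"
          unfolding lst by (rule eqv_mem[OF sw])
      qed
    qed
  qed
qed

lemma Drow_rev_sort:
  assumes g: "goodY n Y p pinv G"
  shows "finite A \<Longrightarrow> A \<subseteq> {1..n} \<Longrightarrow> set L \<subseteq> {1..n} \<Longrightarrow>
    card A = length C1 + length L + length C2 \<Longrightarrow>
    (distinct L \<longrightarrow> eqv G (Drow Y p A (C1 @ rev L @ C2))
        (cst ((- pinv) ^ list_inv L) * Drow Y p A (C1 @ rev (sort L) @ C2))) \<and>
    (\<not> distinct L \<longrightarrow> Drow Y p A (C1 @ rev L @ C2) \<in> ideal_gen G)"
proof (induct L arbitrary: C2)
  case Nil
  then show ?case by (simp add: K_one list_inv_def)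
next
  case (Cons c L')
  have c: "c \<in> {1..n}" and L': "set L' \<subseteq> {1..n}" using Cons(4) by auto
  have lst: "C1 @ rev (c # L') @ C2 = C1 @ rev L' @ c # C2" by simp
  have IH: "(distinct L' \<longrightarrow> eqv G (Drow Y p A (C1 @ rev L' @ c # C2))
        (cst ((- pinv) ^ list_inv L') * Drow Y p A (C1 @ rev (sort L') @ c # C2))) \<and>
    (\<not> distinct L' \<longrightarrow> Drow Y p A (C1 @ rev L' @ c # C2) \<in> ideal_gen G)"
    by (rule Cons(1)[OF Cons(2,3) L']) (use Cons(5) in simp)
  show ?case
  proof (cases "distinct L'")
    case False
    then have "Drow Y p A (C1 @ rev L' @ c # C2) \<in> ideal_gen G" using IH by blast
    then show ?thesis using False unfolding lst by simp
  next
    case True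
    have ev1: "eqv G (Drow Y p A (C1 @ rev L' @ c # C2))
        (cst ((- pinv) ^ list_inv L') * Drow Y p A (C1 @ rev (sort L') @ c # C2))" using IH True by blast
    have ss: "sorted_wrt (<) (sort L')" using True by (simp add: strict_sorted_iff)
    have RI: "(c \<notin> set (sort L') \<longrightarrow> eqv G (Drow Y p A (C1 @ rev (sort L') @ c # C2))
        (cst ((- pinv) ^ card {x\<in>set (sort L'). x < c}) * Drow Y p A (C1 @ rev (insort c (sort L')) @ C2))) \<and>
      (c \<in> set (sort L') \<longrightarrow> Drow Y p A (C1 @ rev (sort L') @ c # C2) \<in> ideal_gen G)"
      by (rule Drow_rev_insert[OF g c Cons(2,3) _ ss]) (use L' Cons(5) in simp_all)
    show ?thesis
    proof (cases "c \<in> set L'")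
      case True
      then have "Drow Y p A (C1 @ rev (sort L') @ c # C2) \<in> ideal_gen G" using RI by simp
      then have "cst ((- pinv) ^ list_inv L') * Drow Y p A (C1 @ rev (sort L') @ c # C2) \<in> ideal_gen G"
        by (rule IK)
      then have "Drow Y p A (C1 @ rev L' @ c # C2) \<in> ideal_gen G" by (rule eqv_mem[OF ev1])
      then show ?thesis using True unfolding lst by simp
    next
      case False
      have ev2: "eqv G (Drow Y p A (C1 @ rev (sort L') @ c # C2))
        (cst ((- pinv) ^ card {x\<in>set L'. x < c}) * Drow Y p A (C1 @ rev (insort c (sort L')) @ C2))"
        using RI False by simp
      have inv: "list_inv (c # L') = card {x\<in>set L'. x < c} + list_inv L'"
      proof -
        have "length (filter (\<lambda>x. x < c) L') = card ({x. x < c} \<inter> set L')"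
          using \<open>distinct L'\<close> by (simp add: distinct_length_filter)
        also have "{x. x < c} \<inter> set L' = {x\<in>set L'. x < c}" by auto
        finally show ?thesis by (simp add: list_inv_Cons)
      qed
      have "eqv G (Drow Y p A (C1 @ rev (c # L') @ C2))
        (cst ((- pinv) ^ list_inv L') * (cst ((- pinv) ^ card {x\<in>set L'. x < c}) * Drow Y p A (C1 @ rev (insort c (sort L')) @ C2)))"
        unfolding lst by (rule eqv_trans[OF ev1 eqv_K[OF ev2]])
      also have "cst ((- pinv) ^ list_inv L') * (cst ((- pinv) ^ card {x\<in>set L'. x < c}) * Drow Y p A (C1 @ rev (insort c (sort L')) @ C2))
         = cst ((- pinv) ^ list_inv (c # L')) * Drow Y p A (C1 @ rev (sort (c # L')) @ C2)"
        unfolding inv by (simp add: mult.assoc[symmetric] K_mult[symmetric] power_add mult.commute)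
      finally show ?thesis using False True by simp
    qed
  qed
qed



abbreviation sl :: "nat set \<Rightarrow> nat list" where "sl \<equiv> sorted_list_of_set"

lemmas [trans] = eqv_trans

lemma rk_Min: "finite A \<Longrightarrow> rk A (Min A) = 0"
  using Min_le by (fastforce simp: rk_def)

lemma Min_diff:
  assumes "finite A" "a \<in> A" "a \<noteq> Min A"
  shows "Min (A - {a}) = Min A"
proof (rule Min_eqI)
  show "finite (A - {a})" using assms by simp
  show "Min A \<in> A - {a}" using assms by (auto intro: Min_in)
  fix y assume "y \<in> A - {a}" then show "Min A \<le> y" using assms by simp
qed

lemma Drow_first_row:
  assumes g: "goodY n Y p pinv G"
  shows "finite B \<Longrightarrow> B \<noteq> {} \<Longrightarrow> B \<subseteq> {1..n} \<Longrightarrow> finite A \<Longrightarrow> A \<subseteq> {1..n} \<Longrightarrow> card A = card B \<Longrightarrow>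
    eqv G (Drow Y p A (sl B))
      (\<Sum>b\<in>B. cst ((- p) ^ rk B b) * amul (Y (Min A) b) (Drow Y p (A - {Min A}) (sl (B - {b}))))"
proof (induct "card B" arbitrary: A B rule: less_induct)
  case less
  have rels: "qmat_rels n Y p pinv \<subseteq> G" and im: "ismono Y" using g by (auto simp: goodY_def)
  note fB = less(2) and Bne = less(3) and BN = less(4) and fA = less(5) and AN = less(6) and cAB = less(7)
  define c where "c = Min B"
  define B' where "B' = B - {c}"
  define m where "m = Min A"
  have Ane: "A \<noteq> {}" using cAB Bne fB by auto
  have cB: "c \<in> B" unfolding c_def using fB Bne by (rule Min_in)
  have mA: "m \<in> A" unfolding m_def using fA Ane by (rule Min_in)
  have slB: "sl B = c # sl B'" unfolding c_def B'_def by (rule sorted_list_of_set_nonempty[OF fB Bne])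
  have fB': "finite B'" using fB by (simp add: B'_def)
  have cB'': "\<forall>b\<in>B'. c < b" unfolding B'_def c_def using fB by (auto simp: less_le)
  have ma: "\<forall>a\<in>A - {m}. m < a" unfolding m_def using fA by (auto simp: less_le)
  have exp: "Drow Y p A (sl B) = cst ((- p) ^ rk A m) * amul (Y m c) (Drow Y p (A - {m}) (sl B'))
     + (\<Sum>a\<in>A - {m}. cst ((- p) ^ rk A a) * amul (Y a c) (Drow Y p (A - {a}) (sl B')))"
    unfolding slB Drow_Cons[OF fA Ane] by (rule sum.remove[OF fA mA])
  have rhs: "(\<Sum>b\<in>B. cst ((- p) ^ rk B b) * amul (Y m b) (Drow Y p (A - {m}) (sl (B - {b}))))
    = cst ((- p) ^ rk B c) * amul (Y m c) (Drow Y p (A - {m}) (sl B'))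
     + (\<Sum>b\<in>B'. cst ((- p) ^ rk B b) * amul (Y m b) (Drow Y p (A - {m}) (sl (B - {b}))))"
    unfolding B'_def by (rule sum.remove[OF fB cB])
  have r0: "rk A m = 0" "rk B c = 0" unfolding m_def c_def using fA fB by (simp_all add: rk_Min)
  have P2: "eqv G (\<Sum>a\<in>A - {m}. cst ((- p) ^ rk A a) * amul (Y a c) (Drow Y p (A - {a}) (sl B')))
     (\<Sum>b\<in>B'. cst ((- p) ^ rk B b) * amul (Y m b) (Drow Y p (A - {m}) (sl (B - {b}))))"
  proof (cases "B' = {}")
    case True
    have "card B = 1" using True cB fB unfolding B'_def
      by (metis card_1_singletonE card_Diff_singleton_if card.empty card_gt_0_iff diff_Suc_1 empty_iff One_nat_def Suc_pred Bne)
    then have "card A = 1" using cAB by simp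
    then have Am: "A - {m} = {}" using mA by (metis card_1_singletonE singletonD Diff_cancel)
    show ?thesis unfolding Am True by simp
  next
    case False
    define D where "D a b = Drow Y p (A - {m} - {a}) (sl (B' - {b}))" for a b
    define T1 where "T1 a b = cst ((- p) ^ rk A a * (- p) ^ rk B' b) * amul (amul (Y a c) (Y m b)) (D a b)" for a b
    define T2 where "T2 a b = cst ((- p) ^ rk A a * (- p) ^ rk B' b) * amul (amul (Y m b) (Y a c)) (D a b)" for a b
    have cB'lt: "card B' < card B" unfolding B'_def by (rule card_Diff1_less[OF fB cB])
    have s1: "eqv G (\<Sum>a\<in>A - {m}. cst ((- p) ^ rk A a) * amul (Y a c) (Drow Y p (A - {a}) (sl B')))
        (\<Sum>a\<in>A - {m}. \<Sum>b\<in>B'. T1 a b)"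
    proof (rule eqv_sum)
      fix a assume a: "a \<in> A - {m}"
      have Ma: "Min (A - {a}) = m" unfolding m_def by (rule Min_diff) (use fA a m_def in auto)
      have e: "A - {a} - {m} = A - {m} - {a}" by auto
      have cA': "card (A - {a}) = card B'" unfolding B'_def using fA fB a cB cAB by (simp add: card_Diff_singleton)
      have IH: "eqv G (Drow Y p (A - {a}) (sl B'))
        (\<Sum>b\<in>B'. cst ((- p) ^ rk B' b) * amul (Y (Min (A - {a})) b) (Drow Y p (A - {a} - {Min (A - {a})}) (sl (B' - {b}))))"
        by (rule less(1)[OF cB'lt fB' False]) (use BN AN fA cA' in \<open>auto simp: B'_def\<close>)
      have "eqv G (cst ((- p) ^ rk A a) * amul (Y a c) (Drow Y p (A - {a}) (sl B')))
         (cst ((- p) ^ rk A a) * amul (Y a c) (\<Sum>b\<in>B'. cst ((- p) ^ rk B' b) * amul (Y m b) (D a b)))"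
        by (rule eqv_K, rule eqv_lmul[OF fs_Y[OF im]]) (use IH in \<open>simp add: Ma e D_def\<close>)
      also have "cst ((- p) ^ rk A a) * amul (Y a c) (\<Sum>b\<in>B'. cst ((- p) ^ rk B' b) * amul (Y m b) (D a b))
          = (\<Sum>b\<in>B'. T1 a b)"
        unfolding T1_def
        by (simp add: amul_sum_right amul_K_right amul_Y_assoc[OF im] sum_distrib_left K_mult mult.assoc)
      finally show "eqv G (cst ((- p) ^ rk A a) * amul (Y a c) (Drow Y p (A - {a}) (sl B'))) (\<Sum>b\<in>B'. T1 a b)" .
    qed
    have s2: "eqv G (\<Sum>a\<in>A - {m}. \<Sum>b\<in>B'. T1 a b) (\<Sum>a\<in>A - {m}. \<Sum>b\<in>B'. T2 a b)"
      unfolding T1_def T2_def D_def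
    proof (intro eqv_sum eqv_K eqv_rmul fs_Drow im)
      fix a b assume a: "a \<in> A - {m}" and b: "b \<in> B'"
      have "amul (Y m b) (Y a c) - amul (Y a c) (Y m b) \<in> G"
        by (rule qrel3[OF rels]) (use a b ma cB'' AN BN cB mA in \<open>auto simp: D_def B'_def\<close>)
      then show "eqv G (amul (Y a c) (Y m b)) (amul (Y m b) (Y a c))" by (rule eqv_sym[OF eqv_gen])
    qed
    have s3: "(\<Sum>a\<in>A - {m}. \<Sum>b\<in>B'. T2 a b) =
       (\<Sum>b\<in>B'. cst ((- p) ^ rk B b) * amul (Y m b) (Drow Y p (A - {m}) (sl (B - {b}))))"
    proof -
      have "(\<Sum>a\<in>A - {m}. \<Sum>b\<in>B'. T2 a b) = (\<Sum>b\<in>B'. \<Sum>a\<in>A - {m}. T2 a b)" by (rule sum.swap)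
      also have "\<dots> = (\<Sum>b\<in>B'. cst ((- p) ^ rk B b) * amul (Y m b) (Drow Y p (A - {m}) (sl (B - {b}))))"
      proof (rule sum.cong[OF refl])
        fix b assume b: "b \<in> B'"
        have cAm: "card (A - {m}) = card B'" unfolding B'_def using fA fB mA cB cAB by (simp add: card_Diff_singleton)
        have Amne: "A - {m} \<noteq> {}"
        proof
          assume e0: "A - {m} = {}"
          have "card B' = 0" using cAm unfolding e0 by simp
          then show False using False fB' by simp
        qed
        have rkb: "rk B b = Suc (rk B' b)" unfolding B'_def using rk_diff_less[OF fB cB, of b] cB'' b
          by (simp add: B'_def)
        have slBb: "sl (B - {b}) = c # sl (B' - {b})"
        proof -
          have ne: "B - {b} \<noteq> {}" using cB b cB'' by auto
          have Mb: "Min (B - {b}) = c" unfolding c_def by (rule Min_diff) (use fB b cB'' c_def B'_def in auto)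
          have "B - {b} - {c} = B' - {b}" unfolding B'_def by auto
          then show ?thesis using sorted_list_of_set_nonempty[OF _ ne] fB Mb by simp
        qed
        have rka: "\<And>a. a \<in> A - {m} \<Longrightarrow> rk A a = Suc (rk (A - {m}) a)"
          using rk_diff_less[OF fA mA] ma by (metis One_nat_def Suc_pred' le_simps(3) less_numeral_extra(3) not_gr_zero)
        have "(\<Sum>a\<in>A - {m}. T2 a b) = cst ((- p) ^ rk B' b) * amul (Y m b)
            (\<Sum>a\<in>A - {m}. cst ((- p) ^ rk A a) * amul (Y a c) (D a b))"
          unfolding T2_def
          by (simp add: amul_sum_right amul_K_right amul_Y_assoc[OF im] sum_distrib_left K_mult mult.assoc mult.left_commute)
        also have "(\<Sum>a\<in>A - {m}. cst ((- p) ^ rk A a) * amul (Y a c) (D a b))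
            = cst (- p) * Drow Y p (A - {m}) (c # sl (B' - {b}))"
          unfolding Drow_Cons[OF finite_Diff[OF fA] Amne] D_def sum_distrib_left
          by (rule sum.cong[OF refl]) (simp only: rka power_Suc K_mult mult.assoc)
        finally show "(\<Sum>a\<in>A - {m}. T2 a b) = cst ((- p) ^ rk B b) * amul (Y m b) (Drow Y p (A - {m}) (sl (B - {b})))"
          unfolding slBb rkb by (simp only: amul_K_right power_Suc K_mult mult.assoc mult.left_commute)
      qed
      finally show ?thesis .
    qed
    show ?thesis using eqv_trans[OF s1 s2] unfolding s3 .
  qed
  have "eqv G (Drow Y p A (sl B))
     (cst ((- p) ^ rk A m) * amul (Y m c) (Drow Y p (A - {m}) (sl B'))
      + (\<Sum>b\<in>B'. cst ((- p) ^ rk B b) * amul (Y m b) (Drow Y p (A - {m}) (sl (B - {b})))))"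
    unfolding exp by (rule eqv_add[OF eqv_refl P2])
  then show ?case unfolding m_def[symmetric] rhs r0 by simp
qed

lemma Drow_Ccol:
  assumes g: "goodY n Y p pinv G"
  shows "finite A \<Longrightarrow> A \<subseteq> {1..n} \<Longrightarrow> finite B \<Longrightarrow> B \<subseteq> {1..n} \<Longrightarrow> card A = card B \<Longrightarrow>
    eqv G (Drow Y p A (sl B)) (Ccol Y p (sl A) B)"
proof (induct "card A" arbitrary: A B)
  case 0
  then have "A = {}" "B = {}" by auto
  then show ?case by (simp add: Drow_Nil Ccol_Nil)
next
  case (Suc k)
  have im: "ismono Y" using g by (auto simp: goodY_def)
  have Ane: "A \<noteq> {}" and Bne: "B \<noteq> {}" using Suc by auto
  define m where "m = Min A"
  have mA: "m \<in> A" unfolding m_def using Suc(3) Ane by (rule Min_in)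
  have slA: "sl A = m # sl (A - {m})" unfolding m_def by (rule sorted_list_of_set_nonempty[OF Suc(3) Ane])
  have "eqv G (Drow Y p A (sl B))
      (\<Sum>b\<in>B. cst ((- p) ^ rk B b) * amul (Y m b) (Drow Y p (A - {m}) (sl (B - {b}))))"
    unfolding m_def by (rule Drow_first_row[OF g Suc(5) Bne Suc(6) Suc(3) Suc(4) Suc(7)])
  also have "eqv G \<dots> (\<Sum>b\<in>B. cst ((- p) ^ rk B b) * amul (Y m b) (Ccol Y p (sl (A - {m})) (B - {b})))"
  proof (intro eqv_sum eqv_K eqv_lmul fs_Y im)
    fix b assume b: "b \<in> B"
    show "eqv G (Drow Y p (A - {m}) (sl (B - {b}))) (Ccol Y p (sl (A - {m})) (B - {b}))"
      by (rule Suc(1)) (use Suc(2-7) mA b in \<open>auto simp: card_Diff_singleton\<close>)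
  qed
  also have "(\<Sum>b\<in>B. cst ((- p) ^ rk B b) * amul (Y m b) (Ccol Y p (sl (A - {m})) (B - {b}))) = Ccol Y p (sl A) B"
    unfolding slA by (rule Ccol_Cons[OF Suc(5) Bne, symmetric])
  finally show ?case .
qed



abbreviation GG :: "nat \<Rightarrow> 'r::comm_ring_1 \<Rightarrow> 'r \<Rightarrow> 'r elt set" where
  "GG n q qi \<equiv> rels n q qi \<union> {qdet1 n}"

lemma goodX: "q * qi = 1 \<Longrightarrow> goodY n X q qi (GG n q qi)"
  by (auto simp: goodY_def rels_def ismono_X)
lemma goodXs: "q * qi = 1 \<Longrightarrow> goodY n Xs qi q (GG n q qi)"
  by (auto simp: goodY_def rels_def ismono_Xs mult.commute)

lemma XXs: "amul (X i l) (Xs j l) = mono ([(i, l)], [(j, l)])"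
  by (simp add: X_def Xs_def amul_mono_mono)

lemma E_in:
  fixes q qi :: "'r::comm_ring_1"
  assumes "n \<ge> 1" "i \<in> {1..n}" "j \<in> {1..n}"
  shows "(\<Sum>l\<in>{1..n}. mono ([(i, l)], [(j, l)])) \<in> ideal_gen (GG n q qi)"
proof (cases "i = j")
  case False
  have "asum (\<lambda>k. amul (X i k) (Xs j k)) {1..n} \<in> rels n q qi"
    unfolding rels_def using assms False by blast
  then show ?thesis by (intro Igen) (simp add: asum_eq XXs)
next
  case True
  define T where "T = asum (\<lambda>k. asmult (q ^ (2 * k) * qi ^ (2 * 1)) (amul (X k 1) (Xs k 1))) {1..n}"
  define E where "E a = (\<Sum>l\<in>{1..n}. (mono ([(a, l)], [(a, l)]) :: 'r elt))" for a :: nat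
  have Ea: "asum (\<lambda>k. amul (X a k) (Xs a k)) {1..n} = E a" for a by (simp add: asum_eq XXs E_def)
  have one: "(1::nat) \<in> {1..n}" using assms by simp
  have r1: "asub T (asum (\<lambda>k. amul (X j k) (Xs j k)) {1..n}) \<in> rels n q qi"
    unfolding rels_def T_def using assms one by blast
  have r2: "asub T (asum (\<lambda>k. amul (X 1 k) (Xs 1 k)) {1..n}) \<in> rels n q qi"
    unfolding rels_def T_def using assms one by blast
  have d: "qdet1 n = E 1" unfolding qdet1_def Ea by simp
  have m1: "T - E 1 \<in> ideal_gen (GG n q qi)"
  proof (rule Igen)
    show "T - E 1 \<in> GG n q qi" using r2 unfolding asub_eq Ea by blast
  qed
  have m2: "T - E j \<in> ideal_gen (GG n q qi)"
  proof (rule Igen)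
    show "T - E j \<in> GG n q qi" using r1 unfolding asub_eq Ea by blast
  qed
  have m3: "E 1 \<in> ideal_gen (GG n q qi)" by (rule Igen) (use d in simp)
  have "E j = (T - E 1) - (T - E j) + E 1" by simp
  also have "\<dots> \<in> ideal_gen (GG n q qi)" by (rule Iadd[OF Idiff[OF m1 m2] m3])
  finally show ?thesis using True by (simp add: E_def)
qed

lemma ctr1:
  assumes "n \<ge> 1" "i \<in> {1..n}" "j \<in> {1..n}"
  shows "(\<Sum>l\<in>{1..n}. mono (u1 @ (i, l) # u2, v1 @ (j, l) # v2)) \<in> ideal_gen (GG n q qi)"
proof -
  have "(\<Sum>l\<in>{1..n}. mono (u1 @ (i, l) # u2, v1 @ (j, l) # v2)) =
     amul (amul (mono (u1, v1)) (\<Sum>l\<in>{1..n}. mono ([(i, l)], [(j, l)]))) (mono (u2, v2))"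
    by (simp add: amul_sum_left amul_sum_right amul_mono_mono)
  also have "\<dots> \<in> ideal_gen (GG n q qi)" by (intro Irmono Ilmono E_in assms)
  finally show ?thesis .
qed

lemma ctr1_split:
  assumes "n \<ge> 1" "i \<in> {1..n}" "j \<in> {1..n}" "D \<subseteq> {1..n}"
  shows "eqv (GG n q qi) (\<Sum>l\<in>D. mono (u1 @ (i, l) # u2, v1 @ (j, l) # v2))
     (- (\<Sum>l\<in>{1..n} - D. mono (u1 @ (i, l) # u2, v1 @ (j, l) # v2)))"
proof -
  have tot: "(\<Sum>l\<in>D. mono (u1 @ (i, l) # u2, v1 @ (j, l) # v2)) + (\<Sum>l\<in>{1..n} - D. mono (u1 @ (i, l) # u2, v1 @ (j, l) # v2))
     = (\<Sum>l\<in>{1..n}. mono (u1 @ (i, l) # u2, v1 @ (j, l) # v2))"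
    using assms(4) by (subst sum.union_disjoint[symmetric]) (auto intro: finite_subset simp: Un_Diff_cancel2 Un_absorb2 Un_commute[of D])
  show ?thesis unfolding eqv_def diff_minus_eq_add tot by (rule ctr1[OF assms(1-3)])
qed

definition lists_k :: "nat \<Rightarrow> nat set \<Rightarrow> nat list set" where
  "lists_k k D = {xs. set xs \<subseteq> D \<and> length xs = k}"

lemma finite_lists_k: "finite D \<Longrightarrow> finite (lists_k k D)"
  unfolding lists_k_def by (rule finite_lists_length_eq)

lemma sum_lists_Suc:
  assumes "finite D"
  shows "(\<Sum>K\<in>lists_k (Suc k) D. f K) = (\<Sum>l\<in>D. \<Sum>K\<in>lists_k k D. f (l # K))"
proof -
  have e: "lists_k (Suc k) D = (\<lambda>(l, K). l # K) ` (D \<times> lists_k k D)"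
  proof (rule set_eqI)
    fix xs show "xs \<in> lists_k (Suc k) D \<longleftrightarrow> xs \<in> (\<lambda>(l, K). l # K) ` (D \<times> lists_k k D)"
      unfolding lists_k_def by (cases xs) (auto simp: image_iff)
  qed
  have inj: "inj_on (\<lambda>(l, K). l # K) (D \<times> lists_k k D)" by (auto simp: inj_on_def)
  show ?thesis unfolding e sum.reindex[OF inj] sum.cartesian_product by (rule sum.cong) (auto simp: split_beta)
qed

lemma sum_lists_0: "(\<Sum>K\<in>lists_k 0 D. f K) = f []"
proof -
  have "lists_k 0 D = {[]}" unfolding lists_k_def by auto
  then show ?thesis by simp
qed

lemma multi_ctr:
  fixes q qi :: "'r::comm_ring_1"
  assumes n: "n \<ge> 1" and D: "D \<subseteq> {1..n}"
  shows "length a = k \<Longrightarrow> length b = k \<Longrightarrow> set a \<subseteq> {1..n} \<Longrightarrow> set b \<subseteq> {1..n} \<Longrightarrow>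
    eqv (GG n q qi) (\<Sum>K\<in>lists_k k D. mono (u1 @ zip a (rev K) @ u2, v1 @ zip b K @ v2))
     (cst ((-1) ^ k) * (\<Sum>K\<in>lists_k k ({1..n} - D). mono (u1 @ zip a (rev K) @ u2, v1 @ zip b K @ v2)))"
proof (induct k arbitrary: a b u2 v1)
  case 0
  then show ?case unfolding sum_lists_0 by (simp add: K_one)
next
  case (Suc k)
  obtain a' la where a: "a = a' @ [la]" using Suc(2) by (metis length_Suc_conv_rev)
  obtain hb b' where b: "b = hb # b'" using Suc(3) by (metis length_Suc_conv)
  have la: "la \<in> {1..n}" and hb: "hb \<in> {1..n}" using Suc(4,5) a b by auto
  have la': "length a' = k" "length b' = k" "set a' \<subseteq> {1..n}" "set b' \<subseteq> {1..n}" using Suc(2-5) a b by auto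
  have fD: "finite D" using D by (rule finite_subset) simp
  have fDc: "finite ({1..n} - D)" by simp
  define F where "F l K = (mono (u1 @ zip a' (rev K) @ (la, l) # u2, (v1 @ [(hb, l)]) @ zip b' K @ v2) :: 'r elt)" for l K
  have tm: "\<And>l K. length K = k \<Longrightarrow> mono (u1 @ zip a (rev (l # K)) @ u2, v1 @ zip b (l # K) @ v2) = F l K"
    unfolding F_def a b using la' by simp
  have sumF: "\<And>E. finite E \<Longrightarrow> (\<Sum>K\<in>lists_k (Suc k) E. mono (u1 @ zip a (rev K) @ u2, v1 @ zip b K @ v2))
     = (\<Sum>l\<in>E. \<Sum>K\<in>lists_k k E. F l K)"
    apply (subst sum_lists_Suc, assumption)
    apply (rule sum.cong[OF refl], rule sum.cong[OF refl], rule tm)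
    apply (simp add: lists_k_def)
    done
  have "eqv (GG n q qi) (\<Sum>l\<in>D. \<Sum>K\<in>lists_k k D. F l K) (\<Sum>l\<in>D. cst ((-1) ^ k) * (\<Sum>K\<in>lists_k k ({1..n} - D). F l K))"
    unfolding F_def by (intro eqv_sum Suc(1) la')
  also have "(\<Sum>l\<in>D. cst ((-1) ^ k) * (\<Sum>K\<in>lists_k k ({1..n} - D). F l K)) =
      cst ((-1) ^ k) * (\<Sum>K\<in>lists_k k ({1..n} - D). \<Sum>l\<in>D. F l K)"
    by (simp add: sum_distrib_left sum.swap[of _ D])
  also have "eqv (GG n q qi) \<dots> (cst ((-1) ^ k) * (\<Sum>K\<in>lists_k k ({1..n} - D). - (\<Sum>l\<in>{1..n} - D. F l K)))"
  proof (intro eqv_K eqv_sum)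
    fix K
    show "eqv (GG n q qi) (\<Sum>l\<in>D. F l K) (- (\<Sum>l\<in>{1..n} - D. F l K))"
      using ctr1_split[of n la hb D q qi "u1 @ zip a' (rev K)" u2 v1 "zip b' K @ v2", OF n la hb D]
      unfolding F_def by simp
  qed
  also have "cst ((-1) ^ k) * (\<Sum>K\<in>lists_k k ({1..n} - D). - (\<Sum>l\<in>{1..n} - D. F l K)) =
      cst ((-1) ^ Suc k) * (\<Sum>l\<in>{1..n} - D. \<Sum>K\<in>lists_k k ({1..n} - D). F l K)"
  proof -
    have sw: "(\<Sum>K\<in>lists_k k ({1..n} - D). \<Sum>l\<in>{1..n} - D. F l K) = (\<Sum>l\<in>{1..n} - D. \<Sum>K\<in>lists_k k ({1..n} - D). F l K)"
      by (rule sum.swap)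
    show ?thesis unfolding sum_negf sw by (simp add: fun_eq_iff)
  qed
  finally show ?case unfolding sumF[OF fD] sumF[OF fDc] .
qed



lemma prodX: "prodY X R C = mono (zip R C, [])"
proof (induct R arbitrary: C)
  case Nil then show ?case by (simp add: prodY_Nil)
next
  case (Cons a R) then show ?case
    by (cases C) (simp_all add: prodY_Nil2 prodY_Cons X_def amul_mono_mono)
qed

lemma prodXs: "prodY Xs R C = mono ([], zip R C)"
proof (induct R arbitrary: C)
  case Nil then show ?case by (simp add: prodY_Nil)
next
  case (Cons a R) then show ?case
    by (cases C) (simp_all add: prodY_Nil2 prodY_Cons Xs_def amul_mono_mono)
qed

definition Hsum :: "'r::comm_ring_1 \<Rightarrow> nat set \<Rightarrow> nat list \<Rightarrow> nat \<Rightarrow> nat set \<Rightarrow> 'r elt" where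
  "Hsum q A s' k D = (\<Sum>K\<in>lists_k k D. amul (Drow X q A (rev K)) (prodY Xs s' K))"

definition inc :: "nat \<Rightarrow> nat set \<Rightarrow> nat list set" where
  "inc k D = {J. length J = k \<and> sorted_wrt (<) J \<and> set J \<subseteq> D}"

definition Gsum :: "'r::comm_ring_1 \<Rightarrow> 'r \<Rightarrow> nat set \<Rightarrow> nat set \<Rightarrow> nat \<Rightarrow> nat set \<Rightarrow> 'r elt" where
  "Gsum q qi A S k D = (\<Sum>J\<in>inc k D. amul (Drow X q A (rev J)) (Drow Xs qi S J))"

lemma Hsum_expand:
  "Hsum q A s' k E = (\<Sum>R\<in>permutations_of_set A. cst ((- q) ^ list_inv R) *
      (\<Sum>K\<in>lists_k k E. mono ([] @ zip R (rev K) @ [], [] @ zip s' K @ [])))"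
  unfolding Hsum_def Drow_def
  by (simp add: amul_sum_left amul_K_left prodX prodXs amul_mono_mono sum_distrib_left sum.swap[of _ "lists_k k E"])

lemma Hsum_flip:
  fixes q qi :: "'r::comm_ring_1"
  assumes n: "n \<ge> 1" and D: "D \<subseteq> {1..n}" and A: "finite A" "A \<subseteq> {1..n}" "card A = k"
    and s': "length s' = k" "set s' \<subseteq> {1..n}"
  shows "eqv (GG n q qi) (Hsum q A s' k D) (cst ((-1) ^ k) * Hsum q A s' k ({1..n} - D))"
proof -
  have "eqv (GG n q qi) (Hsum q A s' k D) (\<Sum>R\<in>permutations_of_set A. cst ((- q) ^ list_inv R) *
      (cst ((-1) ^ k) * (\<Sum>K\<in>lists_k k ({1..n} - D). mono ([] @ zip R (rev K) @ [], [] @ zip s' K @ []))))"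
    unfolding Hsum_expand
  proof (intro eqv_sum eqv_K)
    fix R assume R: "R \<in> permutations_of_set A"
    have lR: "length R = k" using R A by (simp add: length_finite_permutations_of_set)
    have sR: "set R \<subseteq> {1..n}" using R A by (auto simp: permutations_of_set_def)
    show "eqv (GG n q qi) (\<Sum>K\<in>lists_k k D. mono ([] @ zip R (rev K) @ [], [] @ zip s' K @ []))
        (cst ((-1) ^ k) * (\<Sum>K\<in>lists_k k ({1..n} - D). mono ([] @ zip R (rev K) @ [], [] @ zip s' K @ [])))"
      by (rule multi_ctr[OF n D lR s'(1) sR s'(2)])
  qed
  also have "(\<Sum>R\<in>permutations_of_set A. cst ((- q) ^ list_inv R) *
      (cst ((-1) ^ k) * (\<Sum>K\<in>lists_k k ({1..n} - D). mono ([] @ zip R (rev K) @ [], [] @ zip s' K @ []))))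
    = cst ((-1) ^ k) * Hsum q A s' k ({1..n} - D)"
    unfolding Hsum_expand by (simp add: sum_distrib_left mult.left_commute)
  finally show ?thesis .
qed

lemma sort_perm: "J \<in> inc k D \<Longrightarrow> K \<in> permutations_of_set (set J) \<Longrightarrow> sort K = J"
proof -
  assume J: "J \<in> inc k D" and K: "K \<in> permutations_of_set (set J)"
  have "sort K = sorted_list_of_set (set K)"
    using permutations_of_setD(2)[OF K] by (simp add: sorted_list_of_set_sort_remdups distinct_remdups_id)
  also have "set K = set J" using K by (simp add: permutations_of_set_def)
  also have "sorted_list_of_set (set J) = J"
    using J by (simp add: inc_def sorted_list_of_set_sort_remdups strict_sorted_iff distinct_remdups_id sorted_sort_id)
  finally show ?thesis .
qed

lemma sl_inc: "J \<in> inc k D \<Longrightarrow> sorted_list_of_set (set J) = J"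
  by (simp add: inc_def sorted_list_of_set_sort_remdups strict_sorted_iff distinct_remdups_id sorted_sort_id)

lemma distinct_lists_UN:
  "{K\<in>lists_k k D. distinct K} = (\<Union>J\<in>inc k D. permutations_of_set (set J))"
proof (rule set_eqI, rule iffI)
  fix K assume K: "K \<in> {K\<in>lists_k k D. distinct K}"
  then have "sort K \<in> inc k D" by (auto simp: lists_k_def inc_def strict_sorted_iff)
  moreover have "K \<in> permutations_of_set (set (sort K))" using K by (auto simp: permutations_of_set_def)
  ultimately show "K \<in> (\<Union>J\<in>inc k D. permutations_of_set (set J))" by blast
next
  fix K assume "K \<in> (\<Union>J\<in>inc k D. permutations_of_set (set J))"
  then obtain J where J: "J \<in> inc k D" and K: "K \<in> permutations_of_set (set J)" by blast
  have dK: "distinct K" "set K = set J" using K by (auto simp: permutations_of_set_def)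
  have dJ: "distinct J" using J by (simp add: inc_def strict_sorted_iff)
  have "length K = length J" using distinct_card[OF dK(1)] distinct_card[OF dJ] dK(2) by simp
  then show "K \<in> {K\<in>lists_k k D. distinct K}" using J K by (auto simp: lists_k_def inc_def permutations_of_set_def)
qed

lemma finite_inc: "finite D \<Longrightarrow> finite (inc k D)"
  by (rule finite_subset[OF _ finite_lists_k[of D k]]) (auto simp: inc_def lists_k_def)

lemma Hsum_Gsum:
  fixes q qi :: "'r::comm_ring_1"
  assumes qq: "q * qi = 1" and n: "n \<ge> 1" and D: "D \<subseteq> {1..n}"
    and A: "finite A" "A \<subseteq> {1..n}" "card A = k" and S: "finite S" "S \<subseteq> {1..n}" "card S = k"
  shows "eqv (GG n q qi) (Hsum q A (sorted_list_of_set S) k D) (Gsum q qi A S k D)"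
proof -
  let ?s = "sorted_list_of_set S"
  let ?f = "\<lambda>K. amul (Drow X q A (rev K)) (prodY Xs ?s K)"
  have fD: "finite D" using D by (rule finite_subset) simp
  have fL: "finite (lists_k k D)" by (rule finite_lists_k[OF fD])
  have split: "lists_k k D = {K\<in>lists_k k D. distinct K} \<union> {K\<in>lists_k k D. \<not> distinct K}" by auto
  have Hs: "Hsum q A ?s k D = (\<Sum>K\<in>{K\<in>lists_k k D. distinct K}. ?f K) + (\<Sum>K\<in>{K\<in>lists_k k D. \<not> distinct K}. ?f K)"
    unfolding Hsum_def by (subst split, rule sum.union_disjoint) (use fL in auto)
  have gX: "goodY n X q qi (GG n q qi)" by (rule goodX[OF qq])
  have gXs: "goodY n Xs qi q (GG n q qi)" by (rule goodXs[OF qq])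
  have RS: "\<And>K. K \<in> lists_k k D \<Longrightarrow> (distinct K \<longrightarrow> eqv (GG n q qi) (Drow X q A ([] @ rev K @ []))
        (cst ((- qi) ^ list_inv K) * Drow X q A ([] @ rev (sort K) @ []))) \<and>
    (\<not> distinct K \<longrightarrow> Drow X q A ([] @ rev K @ []) \<in> ideal_gen (GG n q qi))"
    by (rule Drow_rev_sort[OF gX A(1) A(2)]) (use D A(3) in \<open>auto simp: lists_k_def\<close>)
  have nd: "(\<Sum>K\<in>{K\<in>lists_k k D. \<not> distinct K}. ?f K) \<in> ideal_gen (GG n q qi)"
  proof (intro Isum Irmul fs_prodY ismono_Xs)
    fix K assume "K \<in> {K\<in>lists_k k D. \<not> distinct K}"
    then show "Drow X q A (rev K) \<in> ideal_gen (GG n q qi)" using RS by simp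
  qed
  have d1: "eqv (GG n q qi) (\<Sum>K\<in>{K\<in>lists_k k D. distinct K}. ?f K)
      (\<Sum>K\<in>{K\<in>lists_k k D. distinct K}. amul (cst ((- qi) ^ list_inv K) * Drow X q A (rev (sort K))) (prodY Xs ?s K))"
  proof (intro eqv_sum eqv_rmul fs_prodY ismono_Xs)
    fix K assume "K \<in> {K\<in>lists_k k D. distinct K}"
    then show "eqv (GG n q qi) (Drow X q A (rev K)) (cst ((- qi) ^ list_inv K) * Drow X q A (rev (sort K)))"
      using RS by simp
  qed
  have inj: "\<And>i j. i \<in> inc k D \<Longrightarrow> j \<in> inc k D \<Longrightarrow> set i = set j \<Longrightarrow> i = j"
    by (metis sl_inc)
  have d2: "(\<Sum>K\<in>{K\<in>lists_k k D. distinct K}. amul (cst ((- qi) ^ list_inv K) * Drow X q A (rev (sort K))) (prodY Xs ?s K))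
     = (\<Sum>J\<in>inc k D. amul (Drow X q A (rev J)) (Ccol Xs qi ?s (set J)))"
  proof -
    have "(\<Sum>K\<in>{K\<in>lists_k k D. distinct K}. amul (cst ((- qi) ^ list_inv K) * Drow X q A (rev (sort K))) (prodY Xs ?s K))
      = (\<Sum>J\<in>inc k D. \<Sum>K\<in>permutations_of_set (set J). amul (cst ((- qi) ^ list_inv K) * Drow X q A (rev (sort K))) (prodY Xs ?s K))"
      unfolding distinct_lists_UN
      apply (rule sum.UNION_disjoint)
        apply (simp add: finite_inc[OF fD])
       apply simp
      apply (auto simp: permutations_of_set_def dest: inj)
      done
    also have "\<dots> = (\<Sum>J\<in>inc k D. amul (Drow X q A (rev J)) (Ccol Xs qi ?s (set J)))"
    proof (rule sum.cong[OF refl])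
      fix J assume J: "J \<in> inc k D"
      show "(\<Sum>K\<in>permutations_of_set (set J). amul (cst ((- qi) ^ list_inv K) * Drow X q A (rev (sort K))) (prodY Xs ?s K))
         = amul (Drow X q A (rev J)) (Ccol Xs qi ?s (set J))"
        unfolding Ccol_def amul_sum_right
        by (rule sum.cong[OF refl]) (simp add: sort_perm[OF J] amul_K_left amul_K_right)
    qed
    finally show ?thesis .
  qed
  have d3: "eqv (GG n q qi) (\<Sum>J\<in>inc k D. amul (Drow X q A (rev J)) (Ccol Xs qi ?s (set J))) (Gsum q qi A S k D)"
    unfolding Gsum_def
  proof (intro eqv_sum eqv_lmul fs_Drow ismono_X)
    fix J assume J: "J \<in> inc k D"
    have cJ: "card (set J) = k" using J by (auto simp: inc_def strict_sorted_iff distinct_card)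
    have "eqv (GG n q qi) (Drow Xs qi S (sorted_list_of_set (set J))) (Ccol Xs qi ?s (set J))"
      by (rule Drow_Ccol[OF gXs S(1,2)]) (use J D cJ S(3) in \<open>auto simp: inc_def\<close>)
    then show "eqv (GG n q qi) (Ccol Xs qi ?s (set J)) (Drow Xs qi S J)"
      unfolding sl_inc[OF J] by (rule eqv_sym)
  qed
  have "eqv (GG n q qi) (Hsum q A ?s k D) ((\<Sum>K\<in>{K\<in>lists_k k D. distinct K}. ?f K) + 0)"
    unfolding Hs by (rule eqv_add[OF eqv_refl]) (use nd in \<open>simp add: eqv_def\<close>)
  also have "eqv (GG n q qi) ((\<Sum>K\<in>{K\<in>lists_k k D. distinct K}. ?f K) + 0) (Gsum q qi A S k D)"
    using eqv_trans[OF d1 eqv_trans[OF eqv_eq[OF d2] d3]] by simp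
  finally show ?thesis .
qed



lemma strict_nth_less_iff:
  fixes I :: "nat list"
  assumes "sorted_wrt (<) I" "x < length I" "y < length I"
  shows "(I ! x < I ! y) = (x < y)"
proof
  assume h: "I ! x < I ! y"
  show "x < y"
  proof (rule ccontr)
    assume "\<not> x < y"
    then have "y = x \<or> y < x" by auto
    then show False
    proof
      assume "y = x" then show False using h by simp
    next
      assume "y < x" then have "I ! y < I ! x" using sorted_wrt_nth_less[OF assms(1)] assms by blast
      then show False using h by simp
    qed
  qed
next
  assume "x < y" then show "I ! x < I ! y" using sorted_wrt_nth_less[OF assms(1)] assms by blast
qed

lemma sorted_minor_Drow:
  assumes sI: "sorted_wrt (<) I" and lC: "length C = length I"
  shows "sorted_minor Y p I C = Drow Y p (set I) C"
proof -
  define k where "k = length I"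
  define S where "S = {w. w permutes {0..<k}}"
  define \<phi> where "\<phi> w = map (\<lambda>t. I ! (w t)) [0..<k]" for w :: "nat \<Rightarrow> nat"
  have dI: "distinct I" using sI by (simp add: strict_sorted_iff)
  have wk: "\<And>w t. w \<in> S \<Longrightarrow> t < k \<Longrightarrow> w t < k"
    unfolding S_def using permutes_in_image by fastforce
  have inj: "inj_on \<phi> S"
  proof (rule inj_onI)
    fix w1 w2 assume w1: "w1 \<in> S" and w2: "w2 \<in> S" and e: "\<phi> w1 = \<phi> w2"
    show "w1 = w2"
    proof (rule ext)
      fix t show "w1 t = w2 t"
      proof (cases "t < k")
        case True
        have "\<phi> w1 ! t = \<phi> w2 ! t" using e by simp
        then have "I ! (w1 t) = I ! (w2 t)" using True by (simp add: \<phi>_def)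
        then show ?thesis using nth_eq_iff_index_eq[OF dI] wk[OF w1 True] wk[OF w2 True] by (simp add: k_def)
      next
        case False
        then show ?thesis using w1 w2 unfolding S_def by (simp add: permutes_not_in)
      qed
    qed
  qed
  have img: "\<phi> ` S \<subseteq> permutations_of_set (set I)"
  proof
    fix R assume "R \<in> \<phi> ` S"
    then obtain w where w: "w \<in> S" and R: "R = \<phi> w" by blast
    have pw: "w permutes {0..<k}" using w by (simp add: S_def)
    have "inj_on (\<lambda>t. I ! (w t)) {0..<k}"
    proof (rule inj_onI)
      fix x y assume x: "x \<in> {0..<k}" and y: "y \<in> {0..<k}" and e: "I ! (w x) = I ! (w y)"
      then have "w x = w y" using nth_eq_iff_index_eq[OF dI] wk[OF w] by (simp add: k_def)
      then show "x = y" using permutes_inj[OF pw] by (simp add: inj_eq)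
    qed
    then have d: "distinct R" unfolding R \<phi>_def by (simp add: distinct_map)
    have "set R = (\<lambda>t. I ! t) ` (w ` {0..<k})" unfolding R \<phi>_def by auto
    also have "w ` {0..<k} = {0..<k}" by (rule permutes_image[OF pw])
    also have "(\<lambda>t. I ! t) ` {0..<k} = set I" by (auto simp: k_def in_set_conv_nth)
    finally show "R \<in> permutations_of_set (set I)" using d by (simp add: permutations_of_set_def)
  qed
  have cS: "card S = fact k" unfolding S_def by (rule card_permutations) simp_all
  have cT: "card (permutations_of_set (set I)) = fact k" using dI by (simp add: k_def distinct_card)
  have eqT: "\<phi> ` S = permutations_of_set (set I)"
    by (rule card_subset_eq[OF finite_permutations_of_set img]) (simp add: card_image[OF inj] cS cT)
  have "Drow Y p (set I) C = (\<Sum>w\<in>S. cst ((- p) ^ list_inv (\<phi> w)) * prodY Y (\<phi> w) C)"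
    unfolding Drow_def eqT[symmetric] sum.reindex[OF inj] by simp
  also have "\<dots> = sorted_minor Y p I C"
    unfolding sorted_minor_def asum_eq asmult_eq k_def[symmetric] S_def[symmetric]
  proof (rule sum.cong[OF refl])
    fix w assume w: "w \<in> S"
    have li: "list_inv (\<phi> w) = perm_len k w"
      unfolding list_inv_def perm_len_def
    proof (rule arg_cong[where f=card], rule set_eqI)
      fix z :: "nat \<times> nat"
      obtain a b where z: "z = (a, b)" by force
      show "z \<in> {(a, b). a < b \<and> b < length (\<phi> w) \<and> \<phi> w ! b < \<phi> w ! a} \<longleftrightarrow>
            z \<in> {(a, b). a < b \<and> b < k \<and> w b < w a}"
        unfolding z using strict_nth_less_iff[OF sI] wk[OF w] by (auto simp: \<phi>_def k_def)
    qed
    have pr: "prodY Y (\<phi> w) C = aprod (map (\<lambda>t. Y (I ! w t) (C ! t)) [0..<k])"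
      unfolding prodY_def
      by (rule arg_cong[where f=aprod], rule nth_equalityI) (simp_all add: \<phi>_def lC k_def)
    show "cst ((- p) ^ list_inv (\<phi> w)) * prodY Y (\<phi> w) C =
          cst ((- p) ^ perm_len k w) * aprod (map (\<lambda>t. Y (I ! w t) (C ! t)) [0..<k])"
      unfolding li pr ..
  qed
  finally show ?thesis by simp
qed

lemma rminor_eq:
  "distinct r \<Longrightarrow> length C = length r \<Longrightarrow> rminor q qi r C = cst ((- qi) ^ list_inv r) * Drow X q (set r) C"
  unfolding rminor_def gen_minor_def
  by (simp add: asmult_eq sorted_minor_Drow strict_sorted_iff)

lemma rminor_star_eq:
  "distinct s \<Longrightarrow> length C = length s \<Longrightarrow> rminor_star q qi s C = cst ((- q) ^ list_inv s) * Drow Xs qi (set s) C"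
  unfolding rminor_star_def gen_minor_def
  by (simp add: asmult_eq sorted_minor_Drow strict_sorted_iff)

lemma rminor_nd: "\<not> distinct r \<Longrightarrow> rminor q qi r C = 0"
  unfolding rminor_def gen_minor_def by (simp add: azero_eq)
lemma rminor_star_nd: "\<not> distinct s \<Longrightarrow> rminor_star q qi s C = 0"
  unfolding rminor_star_def gen_minor_def by (simp add: azero_eq)



lemma zip_split:
  assumes "length R = length C1 + Suc (length C2)"
  shows "zip R (C1 @ l # C2) = zip (take (length C1) R) C1 @ (R ! length C1, l) # zip (drop (Suc (length C1)) R) C2"
proof -
  have lt: "length C1 < length R" using assms by simp
  have "R = take (length C1) R @ R ! length C1 # drop (Suc (length C1)) R"
    using id_take_nth_drop[OF lt] .
  then have "zip R (C1 @ l # C2) = zip (take (length C1) R @ R ! length C1 # drop (Suc (length C1)) R) (C1 @ l # C2)"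
    by simp
  also have "\<dots> = zip (take (length C1) R) C1 @ zip (R ! length C1 # drop (Suc (length C1)) R) (l # C2)"
    using lt by (intro zip_append) simp
  finally show ?thesis by simp
qed

lemma ctr_single:
  fixes q qi :: "'r::comm_ring_1"
  assumes n: "n \<ge> 1" and A: "finite A" "A \<subseteq> {1..n}" "card A = length C1 + Suc (length C2)"
    and S: "finite S" "S \<subseteq> {1..n}" "card S = Suc (length J')"
  shows "(\<Sum>l\<in>{1..n}. amul (Drow X q A (C1 @ l # C2)) (Drow Xs qi S (l # J'))) \<in> ideal_gen (GG n q qi)"
proof -
  have expand: "\<And>l. amul (Drow X q A (C1 @ l # C2)) (Drow Xs qi S (l # J')) =
     (\<Sum>R'\<in>permutations_of_set S. \<Sum>R\<in>permutations_of_set A.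
        cst ((- qi) ^ list_inv R') * (cst ((- q) ^ list_inv R) * mono (zip R (C1 @ l # C2), zip R' (l # J'))))"
    unfolding Drow_def
    by (simp add: amul_sum_left amul_sum_right amul_K_left amul_K_right prodX prodXs amul_mono_mono sum_distrib_left)
  have "(\<Sum>l\<in>{1..n}. amul (Drow X q A (C1 @ l # C2)) (Drow Xs qi S (l # J'))) =
     (\<Sum>l\<in>{1..n}. \<Sum>R'\<in>permutations_of_set S. \<Sum>R\<in>permutations_of_set A.
        cst ((- qi) ^ list_inv R') * (cst ((- q) ^ list_inv R) * mono (zip R (C1 @ l # C2), zip R' (l # J'))))"
    unfolding expand ..
  also have "\<dots> = (\<Sum>R'\<in>permutations_of_set S. \<Sum>R\<in>permutations_of_set A. \<Sum>l\<in>{1..n}.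
        cst ((- qi) ^ list_inv R') * (cst ((- q) ^ list_inv R) * mono (zip R (C1 @ l # C2), zip R' (l # J'))))"
    by (subst sum.swap, rule sum.cong[OF refl], rule sum.swap)
  also have "\<dots> \<in> ideal_gen (GG n q qi)"
  proof (rule Isum, rule Isum)
    fix R' R assume R': "R' \<in> permutations_of_set S" and R: "R \<in> permutations_of_set A"
    have lR: "length R = length C1 + Suc (length C2)" using R A by (simp add: length_finite_permutations_of_set)
    have lR': "length R' = Suc (length J')" using R' S by (simp add: length_finite_permutations_of_set)
    obtain h t where ht: "R' = h # t" using lR' by (cases R') auto
    have "R ! length C1 \<in> set R" using lR by (intro nth_mem) simp
    then have i: "R ! length C1 \<in> {1..n}" using R A by (auto simp: permutations_of_set_def)
    have j: "h \<in> {1..n}" using R' S ht by (auto simp: permutations_of_set_def)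
    have "(\<Sum>l\<in>{1..n}. cst ((- qi) ^ list_inv R') * (cst ((- q) ^ list_inv R) * mono (zip R (C1 @ l # C2), zip R' (l # J'))))
       = cst ((- qi) ^ list_inv R') * (cst ((- q) ^ list_inv R) * (\<Sum>l\<in>{1..n}. mono (zip (take (length C1) R) C1 @ (R ! length C1, l) # zip (drop (Suc (length C1)) R) C2, [] @ (h, l) # zip t J')))"
      by (simp add: sum_distrib_left zip_split[OF lR] ht)
    also have "\<dots> \<in> ideal_gen (GG n q qi)" by (intro IK ctr1 n i j)
    finally show "(\<Sum>l\<in>{1..n}. cst ((- qi) ^ list_inv R') * (cst ((- q) ^ list_inv R) * mono (zip R (C1 @ l # C2), zip R' (l # J'))))
       \<in> ideal_gen (GG n q qi)" .
  qed
  finally show ?thesis .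
qed

lemma sum3:
  fixes s n :: nat
  assumes "s \<in> {1..n}"
  shows "(\<Sum>l\<in>{1..n}. f l) = (\<Sum>l\<in>{1..<s}. f l) + f s + (\<Sum>l\<in>{s<..n}. f l)"
proof -
  have e: "{1..n} = {1..<s} \<union> insert s {s<..n}" using assms by auto
  show ?thesis unfolding e by (subst sum.union_disjoint) (auto simp: add.assoc)
qed

lemma inc_Suc_sum:
  assumes "k' \<ge> 1"
  shows "(\<Sum>J\<in>inc (Suc k') {1..j}. f J) = (\<Sum>J'\<in>inc k' {1..j}. \<Sum>l\<in>{1..<hd J'}. f (l # J'))"
proof -
  have hdle: "\<And>J'. J' \<in> inc k' {1..j} \<Longrightarrow> \<forall>x\<in>set J'. hd J' \<le> x"
  proof -
    fix J' assume "J' \<in> inc k' {1..j}"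
    then have "sorted_wrt (<) J'" by (simp add: inc_def)
    then show "\<forall>x\<in>set J'. hd J' \<le> x" by (cases J') (auto simp: less_imp_le)
  qed
  have ne: "\<And>J'. J' \<in> inc k' {1..j} \<Longrightarrow> J' \<noteq> []" using assms by (auto simp: inc_def)
  have e: "inc (Suc k') {1..j} = (\<Union>J'\<in>inc k' {1..j}. (\<lambda>l. l # J') ` {1..<hd J'})"
  proof (rule set_eqI, rule iffI)
    fix J assume J: "J \<in> inc (Suc k') {1..j}"
    then obtain x J'' where xJ: "J = x # J''" by (cases J) (auto simp: inc_def)
    have J'': "J'' \<in> inc k' {1..j}" using J xJ by (auto simp: inc_def)
    have "J'' \<noteq> []" by (rule ne[OF J''])
    then have "x < hd J''" using J xJ by (cases J'') (auto simp: inc_def)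
    moreover have "x \<ge> 1" using J xJ by (auto simp: inc_def)
    ultimately have "J \<in> (\<lambda>l. l # J'') ` {1..<hd J''}" unfolding xJ by (intro image_eqI[where x=x]) auto
    then show "J \<in> (\<Union>J'\<in>inc k' {1..j}. (\<lambda>l. l # J') ` {1..<hd J'})" using J'' by blast
  next
    fix J assume "J \<in> (\<Union>J'\<in>inc k' {1..j}. (\<lambda>l. l # J') ` {1..<hd J'})"
    then obtain J' l where J': "J' \<in> inc k' {1..j}" and l: "l \<in> {1..<hd J'}" and J: "J = l # J'" by blast
    have "\<forall>x\<in>set J'. l < x" using hdle[OF J'] l by fastforce
    moreover have "hd J' \<in> set J'" using ne[OF J'] by simp
    then have "hd J' \<le> j" using J' by (auto simp: inc_def)
    ultimately show "J \<in> inc (Suc k') {1..j}" using J' l J by (auto simp: inc_def)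
  qed
  have "(\<Sum>J\<in>inc (Suc k') {1..j}. f J) = (\<Sum>J'\<in>inc k' {1..j}. \<Sum>J\<in>(\<lambda>l. l # J') ` {1..<hd J'}. f J)"
    unfolding e by (rule sum.UNION_disjoint) (auto simp: finite_inc)
  also have "\<dots> = (\<Sum>J'\<in>inc k' {1..j}. \<Sum>l\<in>{1..<hd J'}. f (l # J'))"
    by (rule sum.cong[OF refl], subst sum.reindex) (auto simp: inj_on_def)
  finally show ?thesis .
qed

lemma ring_id:
  fixes P Pi vl vg a b Vs Ws :: "'a::comm_ring_1"
  shows "(P^2 - 1) * vl = (P^2 - 1) * (vl - (- P) * a) + P^2 * ((vl + Vs + vg) + Pi * (a + Ws + b)
     - (vl - (- P) * a) - (vg - (- Pi) * b) - Vs - Pi * Ws) - P * (P * Pi - 1) * a"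
  by (simp add: algebra_simps power2_eq_square)



lemma Gsum_q2:
  fixes q qi :: "'r::comm_ring_1"
  assumes qq: "q * qi = 1" and n: "n \<ge> 1" and jn: "j \<le> n" and k: "k = Suc k'" "k' \<ge> 1"
    and A: "finite A" "A \<subseteq> {1..n}" "card A = k" and S: "finite S" "S \<subseteq> {1..n}" "card S = k"
  shows "cst (q^2 - 1) * Gsum q qi A S k {1..j} \<in> ideal_gen (GG n q qi)"
proof -
  have gX: "goodY n X q qi (GG n q qi)" by (rule goodX[OF qq])
  define g where "g J = amul (Drow X q A (rev J)) (Drow Xs qi S J)" for J
  have "Gsum q qi A S k {1..j} = (\<Sum>J'\<in>inc k' {1..j}. \<Sum>l\<in>{1..<hd J'}. g (l # J'))"
    unfolding Gsum_def g_def[symmetric] k(1) by (rule inc_Suc_sum[OF k(2)])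
  then have eq: "cst (q^2 - 1) * Gsum q qi A S k {1..j} =
      (\<Sum>J'\<in>inc k' {1..j}. cst (q^2 - 1) * (\<Sum>l\<in>{1..<hd J'}. g (l # J')))"
    by (simp add: sum_distrib_left)
  show ?thesis unfolding eq
  proof (rule Isum)
    fix J' assume J': "J' \<in> inc k' {1..j}"
    obtain s1 T where sT: "J' = s1 # T" using J' k(2) by (cases J') (auto simp: inc_def)
    have lJ: "length J' = k'" using J' by (simp add: inc_def)
    have s1n: "s1 \<in> {1..n}" using J' sT jn by (auto simp: inc_def)
    have sgt: "\<forall>x\<in>set T. s1 < x" using J' sT by (simp add: inc_def)
    have cA: "card A = length (rev T) + Suc (Suc (length ([]::nat list)))" using A(3) k(1) lJ sT by simp
    have cA1: "card A = length (rev T @ [s1]) + Suc (length ([]::nat list))" using A(3) k(1) lJ sT by simp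
    have cA2: "card A = length (rev T) + Suc (length [s1])" using A(3) k(1) lJ sT by simp
    have cS: "card S = Suc (length J')" using S(3) k(1) lJ by simp
    define V where "V l = amul (Drow X q A (rev T @ [s1, l])) (Drow Xs qi S (l # J'))" for l
    define W where "W l = amul (Drow X q A (rev T @ [l, s1])) (Drow Xs qi S (l # J'))" for l
    have gV: "\<And>l. g (l # J') = V l" unfolding g_def V_def sT by simp
    have SV: "(\<Sum>l\<in>{1..n}. V l) \<in> ideal_gen (GG n q qi)"
      using ctr_single[OF n A(1,2) cA1 S(1,2) cS] unfolding V_def by simp
    have SW: "(\<Sum>l\<in>{1..n}. W l) \<in> ideal_gen (GG n q qi)"
      using ctr_single[OF n A(1,2) cA2 S(1,2) cS] unfolding W_def by simp
    have Vlt: "\<And>l. l \<in> {1..<s1} \<Longrightarrow> eqv (GG n q qi) (V l) (cst (- q) * W l)"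
    proof -
      fix l assume l: "l \<in> {1..<s1}"
      have ln: "l \<in> {1..n}" using l s1n by auto
      have "eqv (GG n q qi) (Drow X q A (rev T @ s1 # l # [])) (cst (- q) * Drow X q A (rev T @ l # s1 # []))"
        by (rule Drow_swap[OF gX s1n ln _ A(1,2) cA]) (use l in simp)
      then have "eqv (GG n q qi) (V l) (amul (cst (- q) * Drow X q A (rev T @ l # s1 # [])) (Drow Xs qi S (l # J')))"
        unfolding V_def by (intro eqv_rmul fs_Drow ismono_Xs) simp
      then show "eqv (GG n q qi) (V l) (cst (- q) * W l)" by (simp add: W_def amul_K_left)
    qed
    have Vgt: "\<And>l. l \<in> {s1<..n} \<Longrightarrow> eqv (GG n q qi) (V l) (cst (- qi) * W l)"
    proof -
      fix l assume l: "l \<in> {s1<..n}"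
      have ln: "l \<in> {1..n}" using l s1n by auto
      have "eqv (GG n q qi) (Drow X q A (rev T @ s1 # l # [])) (cst (- qi) * Drow X q A (rev T @ l # s1 # []))"
        by (rule Drow_swap'[OF gX ln s1n _ A(1,2) cA]) (use l in simp)
      then have "eqv (GG n q qi) (V l) (amul (cst (- qi) * Drow X q A (rev T @ l # s1 # [])) (Drow Xs qi S (l # J')))"
        unfolding V_def by (intro eqv_rmul fs_Drow ismono_Xs) simp
      then show "eqv (GG n q qi) (V l) (cst (- qi) * W l)" by (simp add: W_def amul_K_left)
    qed
    have Vs: "V s1 \<in> ideal_gen (GG n q qi)"
    proof -
      have "Drow X q A (rev T @ s1 # s1 # []) \<in> ideal_gen (GG n q qi)"
        by (rule Drow_rep[OF gX s1n A(1,2) cA])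
      then show ?thesis unfolding V_def by (intro Irmul fs_Drow ismono_Xs) simp
    qed
    have WVs: "W s1 = V s1" by (simp add: V_def W_def)
    define a where "a = (\<Sum>l\<in>{1..<s1}. W l)"
    define b where "b = (\<Sum>l\<in>{s1<..n}. W l)"
    define vl where "vl = (\<Sum>l\<in>{1..<s1}. V l)"
    define vg where "vg = (\<Sum>l\<in>{s1<..n}. V l)"
    have X3: "vl - cst (- q) * a \<in> ideal_gen (GG n q qi)"
    proof -
      have "eqv (GG n q qi) vl (\<Sum>l\<in>{1..<s1}. cst (- q) * W l)" unfolding vl_def by (rule eqv_sum[OF Vlt])
      then show ?thesis unfolding eqv_def a_def by (simp add: sum_distrib_left)
    qed
    have X4: "vg - cst (- qi) * b \<in> ideal_gen (GG n q qi)"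
    proof -
      have "eqv (GG n q qi) vg (\<Sum>l\<in>{s1<..n}. cst (- qi) * W l)" unfolding vg_def by (rule eqv_sum[OF Vgt])
      then show ?thesis unfolding eqv_def b_def by (simp add: sum_distrib_left)
    qed
    have SV': "vl + V s1 + vg \<in> ideal_gen (GG n q qi)" using SV unfolding sum3[OF s1n] vl_def vg_def .
    have SW': "a + W s1 + b \<in> ideal_gen (GG n q qi)" using SW unfolding sum3[OF s1n] a_def b_def .
    have pp: "cst q * cst qi = (1 :: 'r elt)" using qq by (simp add: K_mult[symmetric] K_one)
    have id: "cst (q^2 - 1) * vl = cst (q^2 - 1) * (vl - cst (- q) * a) + cst (q^2) * ((vl + V s1 + vg) + cst qi * (a + W s1 + b)
       - (vl - cst (- q) * a) - (vg - cst (- qi) * b) - V s1 - cst qi * W s1)"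
    proof -
      have "(cst q ^ 2 - 1) * vl = (cst q ^ 2 - 1) * (vl - (- cst q) * a) + cst q ^ 2 * ((vl + V s1 + vg) + cst qi * (a + W s1 + b)
         - (vl - (- cst q) * a) - (vg - (- cst qi) * b) - V s1 - cst qi * W s1) - cst q * (cst q * cst qi - 1) * a"
        by (rule ring_id)
      then show ?thesis by (simp add: pp K_diff K_power K_minus K_one)
    qed
    have "cst (q^2 - 1) * vl \<in> ideal_gen (GG n q qi)"
    proof -
      have Ws: "W s1 \<in> ideal_gen (GG n q qi)" using Vs by (simp add: WVs)
      have mem: "(vl + V s1 + vg) + cst qi * (a + W s1 + b) - (vl - cst (- q) * a) - (vg - cst (- qi) * b) - V s1 - cst qi * W s1
          \<in> ideal_gen (GG n q qi)"
        by (rule Idiff[OF Idiff[OF Idiff[OF Idiff[OF Iadd[OF SV' IK[OF SW']] X3] X4] Vs] IK[OF Ws]])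
      show ?thesis unfolding id by (rule Iadd[OF IK[OF X3] IK[OF mem]])
    qed
    then show "cst (q^2 - 1) * (\<Sum>l\<in>{1..<hd J'}. g (l # J')) \<in> ideal_gen (GG n q qi)"
    proof -
      have hd: "hd J' = s1" using sT by simp
      show ?thesis unfolding gV hd using \<open>cst (q^2 - 1) * vl \<in> ideal_gen (GG n q qi)\<close> unfolding vl_def .
    qed
  qed
qed



lemma main_eqv:
  fixes q qi :: "'r::comm_ring_1"
  assumes qq: "q * qi = 1" and n: "n \<ge> 1" and k: "k \<ge> 1" and j: "j \<in> {1..n}"
    and A: "finite A" "A \<subseteq> {1..n}" "card A = k" and S: "finite S" "S \<subseteq> {1..n}" "card S = k"
  shows "eqv (GG n q qi) (Gsum q qi A S k {j<..n})
     (cst ((-1) ^ k * q ^ (2 * (\<Sum>i<k. i))) * Gsum q qi A S k {1..j})"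
proof -
  let ?s = "sorted_list_of_set S"
  have ls: "length ?s = k" "set ?s \<subseteq> {1..n}" using S by auto
  have D1: "{j<..n} \<subseteq> {1..n}" using j by auto
  have D2: "{1..j} \<subseteq> {1..n}" using j by auto
  have comp: "{1..n} - {j<..n} = {1..j}" using j by auto
  have e1: "eqv (GG n q qi) (Gsum q qi A S k {j<..n}) (Hsum q A ?s k {j<..n})"
    by (rule eqv_sym, rule Hsum_Gsum[OF qq n D1 A S])
  have e2: "eqv (GG n q qi) (Hsum q A ?s k {j<..n}) (cst ((-1) ^ k) * Hsum q A ?s k {1..j})"
    using Hsum_flip[where q=q and qi=qi, OF n D1 A ls] unfolding comp .
  have e3: "eqv (GG n q qi) (cst ((-1) ^ k) * Hsum q A ?s k {1..j}) (cst ((-1) ^ k) * Gsum q qi A S k {1..j})"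
    by (rule eqv_K, rule Hsum_Gsum[OF qq n D2 A S])
  define N where "N = (\<Sum>i<k. i)"
  have e4: "eqv (GG n q qi) (cst ((-1) ^ k) * Gsum q qi A S k {1..j}) (cst ((-1) ^ k * q ^ (2 * N)) * Gsum q qi A S k {1..j})"
  proof (cases "k = 1")
    case True
    then have "N = 0" by (simp add: N_def)
    then show ?thesis by simp
  next
    case False
    then obtain k' where k': "k = Suc k'" "k' \<ge> 1" using k by (cases k) auto
    have e: "q ^ (2 * N) = (q^2)^N" by (simp only: power_mult)
    have pw: "q ^ (2 * N) = 1 + (q^2 - 1) * (\<Sum>i<N. (q^2)^i)"
      unfolding e power_diff_1_eq[of "q^2" N, symmetric] by simp
    have "cst ((-1) ^ k) * Gsum q qi A S k {1..j} - cst ((-1) ^ k * q ^ (2 * N)) * Gsum q qi A S k {1..j}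
       = cst (- ((-1) ^ k * (\<Sum>i<N. (q^2)^i))) * (cst (q^2 - 1) * Gsum q qi A S k {1..j})"
      unfolding pw by (simp add: fun_eq_iff algebra_simps)
    also have "\<dots> \<in> ideal_gen (GG n q qi)"
      by (rule IK, rule Gsum_q2[OF qq n _ k' A S]) (use j in simp)
    finally show ?thesis unfolding eqv_def .
  qed
  show ?thesis using eqv_trans[OF e1 eqv_trans[OF e2 eqv_trans[OF e3 e4]]] unfolding N_def .
qed

theorem lemma6p7:
  fixes q qi :: "'r::comm_ring_1" and n k j :: nat and r s :: "nat list"
  assumes "q * qi = 1"
    and "n \<ge> 1" and "k \<ge> 1"
    and "length r = k" and "set r \<subseteq> {1..n}"
    and "length s = k" and "set s \<subseteq> {1..n}"
    and "j \<in> {1..n}"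
  shows "cong_det1 n q qi
     (asum (\<lambda>js. amul (rminor q qi r (rev js)) (rminor_star q qi s js))
        {js. length js = k \<and> sorted_wrt (<) js \<and> set js \<subseteq> {j<..n}})
     (asmult ((-1) ^ k * q ^ (2 * (\<Sum>i<k. i)))
        (asum (\<lambda>js. amul (rminor q qi r (rev js)) (rminor_star q qi s js))
           {js. length js = k \<and> sorted_wrt (<) js \<and> set js \<subseteq> {1..j}}))"
proof -
  note qq = assms(1) and n = assms(2) and k = assms(3) and lr = assms(4) and rN = assms(5)
    and ls = assms(6) and sN = assms(7) and j = assms(8)
  define c where "c = (-1) ^ k * q ^ (2 * (\<Sum>i<k. i))"
  have cd: "\<And>a b. cong_det1 n q qi a b \<longleftrightarrow> eqv (GG n q qi) a b"
    by (simp add: cong_det1_def eqv_def asub_eq)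
  define LS where "LS D = asum (\<lambda>js. amul (rminor q qi r (rev js)) (rminor_star q qi s js))
        {js. length js = k \<and> sorted_wrt (<) js \<and> set js \<subseteq> D}" for D
  have goal: "eqv (GG n q qi) (LS {j<..n}) (cst c * LS {1..j})"
  proof (cases "distinct r \<and> distinct s")
    case False
    have z: "\<And>D. LS D = 0"
    proof -
      fix D
      have "\<And>js. amul (rminor q qi r (rev js)) (rminor_star q qi s js) = 0"
        using False by (auto simp: rminor_nd rminor_star_nd amul_zero_left amul_zero_right)
      then show "LS D = 0" unfolding LS_def asum_eq by simp
    qed
    show ?thesis unfolding z by simp
  next
    case True
    then have dr: "distinct r" and ds: "distinct s" by auto
    define A where "A = set r"
    define S where "S = set s"
    have A: "finite A" "A \<subseteq> {1..n}" "card A = k" using rN lr dr by (auto simp: A_def distinct_card)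
    have S: "finite S" "S \<subseteq> {1..n}" "card S = k" using sN ls ds by (auto simp: S_def distinct_card)
    define cr where "cr = (- qi) ^ list_inv r"
    define cs where "cs = (- q) ^ list_inv s"
    have LSG: "\<And>D. LS D = cst (cr * cs) * Gsum q qi A S k D"
    proof -
      fix D
      have "LS D = (\<Sum>js\<in>inc k D. cst (cr * cs) * amul (Drow X q A (rev js)) (Drow Xs qi S js))"
        unfolding LS_def asum_eq inc_def[symmetric]
      proof (rule sum.cong[OF refl])
        fix js assume js: "js \<in> inc k D"
        have l: "length (rev js) = length r" "length js = length s" using js lr ls by (auto simp: inc_def)
        show "amul (rminor q qi r (rev js)) (rminor_star q qi s js) = cst (cr * cs) * amul (Drow X q A (rev js)) (Drow Xs qi S js)"
          unfolding rminor_eq[OF dr l(1)] rminor_star_eq[OF ds l(2)]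
          by (simp add: amul_K_left amul_K_right K_mult cr_def cs_def A_def S_def mult.assoc mult.left_commute)
      qed
      also have "\<dots> = cst (cr * cs) * Gsum q qi A S k D" unfolding Gsum_def by (simp add: sum_distrib_left)
      finally show "LS D = cst (cr * cs) * Gsum q qi A S k D" .
    qed
    have "eqv (GG n q qi) (cst (cr * cs) * Gsum q qi A S k {j<..n})
        (cst (cr * cs) * (cst c * Gsum q qi A S k {1..j}))"
      unfolding c_def by (rule eqv_K, rule main_eqv[OF qq n k j A S])
    then show ?thesis unfolding LSG by (simp add: mult.left_commute)
  qed
  show ?thesis unfolding cd asmult_eq asum_eq[symmetric] using goal unfolding LS_def c_def .
qed


end
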